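(* Let $r\ge2$, $d\in\{1,\dots,r-1\}$ and let $M\in\mathrm{rep}_{\mathrm{proj}}(K_r,d)$ with $\Delta_M(d)>d(r-d)$. Then there exist $a\in\mathbb N$ (a positive integer) and an exact sequence $(0)\to aP_0(r)\to M\to M_{\min}\to(0)$ in $\mathrm{rep}(K_r)$, where $M_{\min}\in\mathrm{rep}_{\mathrm{proj}}(K_r,d)$ and $\Delta_{M_{\min}}(d)=d(r-d)$.
   Context: $k$ algebraically closed of arbitrary characteristic; vector spaces finite-dimensional. $K_r$: Kronecker quiver with arrows $\gamma_1,\dots,\gamma_r:1\to2$; $A_r=\bigoplus_ik\gamma_i$; for $M=(M_1,M_2,(M(\gamma_i))_i)$, $\psi_M:A_r\otimes_kM_1\to M_2$, $\gamma_i\otimes m\mapsto M(\gamma_i)(m)$; $\Delta_M(d)=\dim_kM_2-d\dim_kM_1$. $\mathrm{rep}_{\mathrm{proj}}(K_r,d)$ is the full subcategory of $M$ with $\psi_M|_{\mathfrak v\otimes M_1}$ injective for every $d$-dimensional subspace $\mathfrak v\subseteq A_r$. $P_0(r)=(0,k)$ is the simple projective representation. *)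

theory Defs
  imports Main "HOL.Vector_Spaces" "HOL-Library.Function_Algebras"
begin

class alg_closed_field = field +
  assumes alg_closed: "\<And>(n::nat) (c::nat \<Rightarrow> 'a). n > 0 \<Longrightarrow> \<exists>x. x ^ n + (\<Sum>i<n. c i * x ^ i) = 0"

(* coordinate vectors: k^n = functions nat => k vanishing from index n on *)
definition kvec :: "nat \<Rightarrow> (nat \<Rightarrow> 'k::zero) set" where
  "kvec n = {v. \<forall>i\<ge>n. v i = 0}"

definition sc :: "'k::field \<Rightarrow> (nat \<Rightarrow> 'k) \<Rightarrow> (nat \<Rightarrow> 'k)" where
  "sc c v = (\<lambda>i. c * v i)"

definition sc2 :: "'k::field \<Rightarrow> (nat \<Rightarrow> nat \<Rightarrow> 'k) \<Rightarrow> (nat \<Rightarrow> nat \<Rightarrow> 'k)" where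
  "sc2 c t = (\<lambda>i j. c * t i j)"

definition matapp :: "nat \<Rightarrow> nat \<Rightarrow> (nat \<Rightarrow> nat \<Rightarrow> 'k::field) \<Rightarrow> (nat \<Rightarrow> 'k) \<Rightarrow> (nat \<Rightarrow> 'k)" where
  "matapp m n A v = (\<lambda>i. if i < m then (\<Sum>j<n. A i j * v j) else 0)"

(* a representation of K_r: M_1 = k^(dim1), M_2 = k^(dim2),
   M(gamma_(i+1)) given by the dim2 x dim1 matrix arr i, for i < r *)
record 'k krep =
  dim1 :: nat
  dim2 :: nat
  arr  :: "nat \<Rightarrow> nat \<Rightarrow> nat \<Rightarrow> 'k"

definition arrow :: "'k::field krep \<Rightarrow> nat \<Rightarrow> (nat \<Rightarrow> 'k) \<Rightarrow> (nat \<Rightarrow> 'k)" where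
  "arrow M i = matapp (dim2 M) (dim1 M) (arr M i)"

(* A_r (x) M_1 = k^r (x) k^(dim1): r x dim1 arrays; pure tensor a (x) m *)
definition tens :: "(nat \<Rightarrow> 'k::field) \<Rightarrow> (nat \<Rightarrow> 'k) \<Rightarrow> (nat \<Rightarrow> nat \<Rightarrow> 'k)" where
  "tens a m = (\<lambda>i j. a i * m j)"

(* psi_M : A_r (x) M_1 -> M_2, gamma_i (x) m |-> M(gamma_i)(m) *)
definition psi :: "nat \<Rightarrow> 'k::field krep \<Rightarrow> (nat \<Rightarrow> nat \<Rightarrow> 'k) \<Rightarrow> (nat \<Rightarrow> 'k)" where
  "psi r M t = (\<lambda>l. \<Sum>i<r. arrow M i (t i) l)"

definition tensor_sub :: "'k::field krep \<Rightarrow> (nat \<Rightarrow> 'k) set \<Rightarrow> (nat \<Rightarrow> nat \<Rightarrow> 'k) set" where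
  "tensor_sub M V = module.span sc2 {tens a m | a m. a \<in> V \<and> m \<in> kvec (dim1 M)}"

definition rep_proj :: "nat \<Rightarrow> nat \<Rightarrow> 'k::field krep \<Rightarrow> bool" where
  "rep_proj r d M \<longleftrightarrow>
     (\<forall>V. V \<subseteq> kvec r \<and> module.subspace sc V \<and> vector_space.dim sc V = d
          \<longrightarrow> inj_on (psi r M) (tensor_sub M V))"

definition Delta :: "'k krep \<Rightarrow> nat \<Rightarrow> int" where
  "Delta M d = int (dim2 M) - int d * int (dim1 M)"

definition aP0 :: "nat \<Rightarrow> 'k::zero krep" where
  "aP0 a = \<lparr>dim1 = 0, dim2 = a, arr = (\<lambda>_ _ _. 0)\<rparr>"

(* a morphism M -> N is a pair of matrices (F1, F2), F_v : M_v -> N_v *)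
type_synonym 'k kmor = "(nat \<Rightarrow> nat \<Rightarrow> 'k) \<times> (nat \<Rightarrow> nat \<Rightarrow> 'k)"

definition mor1 :: "'k::field krep \<Rightarrow> 'k krep \<Rightarrow> 'k kmor \<Rightarrow> (nat \<Rightarrow> 'k) \<Rightarrow> (nat \<Rightarrow> 'k)" where
  "mor1 M N f = matapp (dim1 N) (dim1 M) (fst f)"

definition mor2 :: "'k::field krep \<Rightarrow> 'k krep \<Rightarrow> 'k kmor \<Rightarrow> (nat \<Rightarrow> 'k) \<Rightarrow> (nat \<Rightarrow> 'k)" where
  "mor2 M N f = matapp (dim2 N) (dim2 M) (snd f)"

definition is_morph :: "nat \<Rightarrow> 'k::field krep \<Rightarrow> 'k krep \<Rightarrow> 'k kmor \<Rightarrow> bool" where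
  "is_morph r M N f \<longleftrightarrow>
     (\<forall>i<r. \<forall>x\<in>kvec (dim1 M). mor2 M N f (arrow M i x) = arrow N i (mor1 M N f x))"

definition short_exact :: "nat \<Rightarrow> 'k::field krep \<Rightarrow> 'k krep \<Rightarrow> 'k krep \<Rightarrow> 'k kmor \<Rightarrow> 'k kmor \<Rightarrow> bool" where
  "short_exact r L M N g h \<longleftrightarrow>
     is_morph r L M g \<and> is_morph r M N h \<and>
     inj_on (mor1 L M g) (kvec (dim1 L)) \<and> inj_on (mor2 L M g) (kvec (dim2 L)) \<and>
     mor1 L M g ` kvec (dim1 L) = {x \<in> kvec (dim1 M). mor1 M N h x = 0} \<and>
     mor2 L M g ` kvec (dim2 L) = {x \<in> kvec (dim2 M). mor2 M N h x = 0} \<and>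
     mor1 M N h ` kvec (dim1 M) = kvec (dim1 N) \<and>
     mor2 M N h ` kvec (dim2 M) = kvec (dim2 N)"

end

theory Submission
  imports Defs "HOL-Library.FuncSet"
begin

interpretation V: vector_space "sc :: 'k::field \<Rightarrow> (nat \<Rightarrow> 'k) \<Rightarrow> _"
  by unfold_locales (auto simp: sc_def fun_eq_iff algebra_simps)

lemma sum_fapp: "(\<Sum>a\<in>A. f a) x = (\<Sum>a\<in>A. f a x)"
  by (induction A rule: infinite_finite_induct) auto

lemma sc_app[simp]: "sc c v i = c * v i" by (simp add: sc_def)

lemma kvec_iff: "v \<in> kvec n \<longleftrightarrow> (\<forall>i\<ge>n. v i = 0)" by (simp add: kvec_def)

lemma chart:
  fixes V :: "(nat \<Rightarrow> 'k::field) set"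
  assumes VN: "V \<subseteq> kvec N" and sub: "V.subspace V"
  shows "\<exists>S w. S \<subseteq> {..<N} \<and> (\<forall>s\<in>S. w s \<in> V \<and> (\<forall>l\<in>S. w s l = (if l = s then 1 else 0)))
     \<and> (\<forall>v\<in>V. v = (\<Sum>s\<in>S. sc (v s) (w s))) \<and> card S = V.dim V"
proof -
  define SS where "SS = {S. S \<subseteq> {..<N} \<and> (\<forall>v\<in>V. (\<forall>s\<in>S. v s = 0) \<longrightarrow> v = 0)}"
  have "{..<N} \<in> SS"
  proof -
    { fix v assume "v \<in> V" "\<forall>s\<in>{..<N}. v s = 0"
      moreover have "v \<in> kvec N" using VN \<open>v \<in> V\<close> by blast
      ultimately have "v = 0"
      proof (intro ext)
        fix i assume a: "v \<in> kvec N" "\<forall>s\<in>{..<N}. v s = 0"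
        show "v i = 0 i"
        proof (cases "i < N")
          case True then show ?thesis using a(2) by simp
        next
          case False then show ?thesis using a(1) by (simp add: kvec_def)
        qed
      qed }
    then show ?thesis by (auto simp: SS_def)
  qed
  then obtain S where S: "S \<in> SS" and Smin: "\<And>S'. S' \<in> SS \<Longrightarrow> card S \<le> card S'"
    using ex_has_least_nat[of "\<lambda>S. S \<in> SS" _ card] by blast
  have SN: "S \<subseteq> {..<N}" and Sinj: "\<And>v. v \<in> V \<Longrightarrow> (\<forall>s\<in>S. v s = 0) \<Longrightarrow> v = 0"
    using S by (auto simp: SS_def)
  have finS: "finite S" using SN finite_subset by blast
  have "\<forall>s\<in>S. \<exists>w. w \<in> V \<and> (\<forall>l\<in>S. w l = (if l = s then 1 else 0))"
  proof
    fix s assume s: "s \<in> S"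
    have "S - {s} \<notin> SS"
    proof
      assume "S - {s} \<in> SS"
      from Smin[OF this] have "card S \<le> card (S - {s})" .
      moreover have "card (S - {s}) < card S" using s finS by (meson card_Diff1_less)
      ultimately show False by simp
    qed
    then obtain v where v: "v \<in> V" "\<forall>l\<in>S - {s}. v l = 0" "v \<noteq> 0"
      using SN by (auto simp: SS_def)
    have vs: "v s \<noteq> 0"
    proof
      assume "v s = 0"
      then have "\<forall>l\<in>S. v l = 0" using v(2) by auto
      then show False using Sinj[OF v(1)] v(3) by simp
    qed
    show "\<exists>w. w \<in> V \<and> (\<forall>l\<in>S. w l = (if l = s then 1 else 0))"
    proof (intro exI conjI ballI)
      show "sc (1 / v s) v \<in> V" using v(1) sub by (rule V.subspace_scale[rotated])
      fix l assume "l \<in> S"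
      then show "sc (1 / v s) v l = (if l = s then 1 else 0)" using v(2) vs by auto
    qed
  qed
  then obtain w where w: "\<forall>s\<in>S. w s \<in> V \<and> (\<forall>l\<in>S. w s l = (if l = s then 1 else 0))"
    by metis
  have rep: "\<forall>v\<in>V. v = (\<Sum>s\<in>S. sc (v s) (w s))"
  proof
    fix v assume v: "v \<in> V"
    define z where "z = v - (\<Sum>s\<in>S. sc (v s) (w s))"
    have "z \<in> V" unfolding z_def
      using v w sub by (auto intro!: V.subspace_diff V.subspace_sum V.subspace_scale)
    moreover have "\<forall>l\<in>S. z l = 0"
    proof
      fix l assume l: "l \<in> S"
      have "(\<Sum>s\<in>S. sc (v s) (w s)) l = (\<Sum>s\<in>S. v s * w s l)" by (simp add: sum_fapp)
      also have "\<dots> = (\<Sum>s\<in>S. if s = l then v s else 0)"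
        by (rule sum.cong) (use w l in auto)
      also have "\<dots> = v l" using l finS by simp
      finally show "z l = 0" by (simp add: z_def)
    qed
    ultimately have "z = 0" using Sinj by blast
    then show "v = (\<Sum>s\<in>S. sc (v s) (w s))" by (simp add: z_def)
  qed
  have winj: "inj_on w S"
  proof (rule inj_onI)
    fix s t assume "s \<in> S" "t \<in> S" "w s = w t"
    then have "w s s = w t s" by simp
    then show "s = t" using w \<open>s \<in> S\<close> \<open>t \<in> S\<close> by (auto split: if_splits)
  qed
  have ind: "V.independent (w ` S)"
    unfolding V.independent_explicit_module
  proof (intro allI impI)
    fix t c v assume t: "finite t" "t \<subseteq> w ` S" and c: "(\<Sum>v\<in>t. sc (c v) v) = 0" and v: "v \<in> t"
    then obtain s where s: "s \<in> S" "v = w s" by auto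
    have ev: "v' s = (if v' = v then 1 else 0)" if vt: "v' \<in> t" for v'
    proof -
      obtain s' where "s' \<in> S" "v' = w s'" using vt t by auto
      then show ?thesis using w s winj by (auto simp: inj_on_eq_iff)
    qed
    have "0 = (\<Sum>v\<in>t. sc (c v) v) s" using c by simp
    also have "\<dots> = (\<Sum>v'\<in>t. c v' * v' s)" by (simp add: sum_fapp)
    also have "\<dots> = (\<Sum>v'\<in>t. if v' = v then c v' else 0)"
      by (rule sum.cong[OF refl]) (simp add: ev)
    also have "\<dots> = c v" using v t by simp
    finally show "c v = 0" by simp
  qed
  have spanV: "V.span (w ` S) = V"
  proof
    show "V.span (w ` S) \<subseteq> V" using w sub by (intro V.span_minimal) auto
    show "V \<subseteq> V.span (w ` S)"
    proof
      fix v assume "v \<in> V"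
      then have "v = (\<Sum>s\<in>S. sc (v s) (w s))" using rep by blast
      also have "\<dots> \<in> V.span (w ` S)"
        by (intro V.span_sum V.span_scale V.span_base) auto
      finally show "v \<in> V.span (w ` S)" .
    qed
  qed
  have "V.dim V = card S"
    using V.dim_span_eq_card_independent[OF ind] spanV card_image[OF winj] by simp
  then show ?thesis using SN w rep by (intro exI[of _ S] exI[of _ w]) simp
qed

definition psc :: "'k::field \<Rightarrow> (('v \<Rightarrow> 'k) \<Rightarrow> 'k) \<Rightarrow> (('v \<Rightarrow> 'k) \<Rightarrow> 'k)" where
  "psc c f = (\<lambda>x. c * f x)"

interpretation P: vector_space "psc :: 'k::field \<Rightarrow> (('v \<Rightarrow> 'k) \<Rightarrow> 'k) \<Rightarrow> _"
  by unfold_locales (auto simp: psc_def fun_eq_iff algebra_simps)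

definition pmono :: "'v set \<Rightarrow> ('v \<Rightarrow> nat) \<Rightarrow> ('v \<Rightarrow> 'k::field) \<Rightarrow> 'k" where
  "pmono Z b x = (\<Prod>z\<in>Z. x z ^ b z)"

definition Mon :: "'v set \<Rightarrow> nat \<Rightarrow> (('v \<Rightarrow> 'k::field) \<Rightarrow> 'k) set" where
  "Mon Z E = {pmono Z b | b. \<forall>z\<in>Z. b z \<le> E}"

lemma MonI: "\<forall>z\<in>Z. b z \<le> E \<Longrightarrow> pmono Z b \<in> Mon Z E"
  unfolding Mon_def by blast

abbreviation PS :: "'v set \<Rightarrow> nat \<Rightarrow> (('v \<Rightarrow> 'k::field) \<Rightarrow> 'k) set" where
  "PS Z E \<equiv> P.span (Mon Z E)"

lemma Mon_card:
  assumes "finite Z"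
  shows "finite (Mon Z E :: (('v \<Rightarrow> 'k::field) \<Rightarrow> 'k) set) \<and> card (Mon Z E :: (('v \<Rightarrow> 'k) \<Rightarrow> 'k) set) \<le> (E+1) ^ card Z"
proof -
  have sub: "(Mon Z E :: (('v \<Rightarrow> 'k) \<Rightarrow> 'k) set) \<subseteq> ((\<lambda>b. pmono Z b) :: _ \<Rightarrow> ('v \<Rightarrow> 'k) \<Rightarrow> 'k) ` (PiE Z (\<lambda>_. {..E}))"
  proof
    fix f :: "('v \<Rightarrow> 'k) \<Rightarrow> 'k" assume "f \<in> Mon Z E"
    then obtain b where b: "f = pmono Z b" "\<forall>z\<in>Z. b z \<le> E" by (auto simp: Mon_def)
    have "pmono Z b = pmono Z (restrict b Z)"
      unfolding pmono_def by (intro ext prod.cong) (simp_all add: restrict_def)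
    moreover have "restrict b Z \<in> PiE Z (\<lambda>_. {..E})" using b by (simp add: restrict_PiE_iff)
    ultimately show "f \<in> ((\<lambda>b. pmono Z b) :: _ \<Rightarrow> ('v \<Rightarrow> 'k) \<Rightarrow> 'k) ` (PiE Z (\<lambda>_. {..E}))" using b by blast
  qed
  have fin: "finite (PiE Z (\<lambda>_. {..E}))" using assms by (simp add: finite_PiE)
  have "card (PiE Z (\<lambda>_. {..E})) = (E+1) ^ card Z"
    using assms by (simp add: card_PiE)
  moreover have f2: "finite (Mon Z E :: (('v \<Rightarrow> 'k) \<Rightarrow> 'k) set)" using finite_subset[OF sub] fin by blast
  moreover have "card (Mon Z E :: (('v \<Rightarrow> 'k) \<Rightarrow> 'k) set) \<le> card (((\<lambda>b. pmono Z b) :: _ \<Rightarrow> ('v \<Rightarrow> 'k) \<Rightarrow> 'k) ` (PiE Z (\<lambda>_. {..E})))"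
    using sub fin by (intro card_mono) auto
  moreover have "card (((\<lambda>b. pmono Z b) :: _ \<Rightarrow> ('v \<Rightarrow> 'k) \<Rightarrow> 'k) ` (PiE Z (\<lambda>_. {..E}))) \<le> card (PiE Z (\<lambda>_. {..E}))"
    by (rule card_image_le[OF fin])
  ultimately show ?thesis by linarith
qed

lemma Mon_mono: "E \<le> E' \<Longrightarrow> Mon Z E \<subseteq> Mon Z E'"
  unfolding Mon_def by (smt (verit) Collect_mono le_trans)

lemma PS_mono: "E \<le> E' \<Longrightarrow> f \<in> PS Z E \<Longrightarrow> f \<in> PS Z E'"
  using P.span_mono[OF Mon_mono] by blast

lemma PS_const: "(\<lambda>x. c :: 'k::field) \<in> PS Z E"
proof -
  have "(pmono Z (\<lambda>_. 0) :: _ \<Rightarrow> 'k) \<in> Mon Z E" by (rule MonI) simp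
  then have "psc c (pmono Z (\<lambda>_. 0)) \<in> PS Z E" by (intro P.span_scale P.span_base)
  moreover have "psc c (pmono Z (\<lambda>_. 0)) = (\<lambda>x. c)" by (simp add: psc_def pmono_def)
  ultimately show ?thesis by simp
qed

lemma PS_var:
  fixes z :: 'v
  assumes "finite Z" "z \<in> Z" "1 \<le> E"
  shows "(\<lambda>x. x z :: 'k::field) \<in> PS Z E"
proof -
  define b where "b = (\<lambda>z'. if z' = z then 1 else (0::nat))"
  have "(pmono Z b :: _ \<Rightarrow> 'k) \<in> Mon Z E" using assms by (intro MonI) (simp add: b_def)
  moreover have "(pmono Z b :: _ \<Rightarrow> 'k) = (\<lambda>x. x z)"
  proof (rule ext)
    fix x :: "'v \<Rightarrow> 'k"
    have "pmono Z b x = (\<Prod>z'\<in>Z. if z' = z then x z else 1)"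
      unfolding pmono_def by (intro prod.cong) (simp_all add: b_def)
    also have "\<dots> = x z" using assms by simp
    finally show "pmono Z b x = x z" .
  qed
  ultimately have "(\<lambda>x. x z :: 'k) \<in> Mon Z E" by simp
  then show ?thesis by (rule P.span_base)
qed

lemma PS_add: "f \<in> PS Z E \<Longrightarrow> g \<in> PS Z E \<Longrightarrow> (\<lambda>x. f x + g x) \<in> PS Z E"
  using P.span_add[of f _ g] by (simp add: plus_fun_def)

lemma PS_scale: "f \<in> PS Z E \<Longrightarrow> (\<lambda>x. c * f x) \<in> PS Z E"
  using P.span_scale[of f _ c] by (simp add: psc_def)

lemma PS_sum: "(\<And>i. i \<in> I \<Longrightarrow> f i \<in> PS Z E) \<Longrightarrow> (\<lambda>x. \<Sum>i\<in>I. f i x) \<in> PS Z E"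
proof -
  assume a: "\<And>i. i \<in> I \<Longrightarrow> f i \<in> PS Z E"
  have "(\<Sum>i\<in>I. f i) \<in> PS Z E" using a by (intro P.span_sum) auto
  moreover have "(\<Sum>i\<in>I. f i) = (\<lambda>x. \<Sum>i\<in>I. f i x)" by (simp add: fun_eq_iff sum_fapp)
  ultimately show ?thesis by simp
qed

lemma Mon_mult:
  assumes "f \<in> Mon Z E1" "g \<in> Mon Z E2"
  shows "(\<lambda>x. f x * g x) \<in> Mon Z (E1 + E2)"
proof -
  obtain b where b: "f = pmono Z b" "\<forall>z\<in>Z. b z \<le> E1" using assms by (auto simp: Mon_def)
  obtain c where c: "g = pmono Z c" "\<forall>z\<in>Z. c z \<le> E2" using assms by (auto simp: Mon_def)
  have "(\<lambda>x. f x * g x) = pmono Z (\<lambda>z. b z + c z)"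
    by (simp add: b c pmono_def fun_eq_iff power_add prod.distrib)
  moreover have "\<forall>z\<in>Z. b z + c z \<le> E1 + E2" using b c by (simp add: add_mono)
  ultimately show ?thesis by (simp add: MonI)
qed

lemma PS_mult_Mon:
  assumes f: "f \<in> Mon Z E1" and g: "g \<in> PS Z E2"
  shows "(\<lambda>x. f x * g x) \<in> PS Z (E1 + E2)"
  using g
proof (induction rule: P.span_induct_alt)
  case base
  then show ?case using P.span_zero by (simp add: zero_fun_def)
next
  case (step c x y)
  have "(\<lambda>z. f z * x z) \<in> PS Z (E1 + E2)" using Mon_mult[OF f step(1)] by (rule P.span_base)
  then have "psc c (\<lambda>z. f z * x z) + (\<lambda>z. f z * y z) \<in> PS Z (E1 + E2)"
    using step(2) by (intro P.span_add P.span_scale)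
  moreover have "psc c (\<lambda>z. f z * x z) + (\<lambda>z. f z * y z) = (\<lambda>xa. f xa * (psc c x + y) xa)"
    by (simp add: psc_def fun_eq_iff algebra_simps)
  ultimately show ?case by simp
qed

lemma PS_mult:
  assumes f: "f \<in> PS Z E1" and g: "g \<in> PS Z E2"
  shows "(\<lambda>x. f x * g x) \<in> PS Z (E1 + E2)"
  using f
proof (induction rule: P.span_induct_alt)
  case base
  then show ?case using P.span_zero by (simp add: zero_fun_def)
next
  case (step c x y)
  have "(\<lambda>z. x z * g z) \<in> PS Z (E1 + E2)" using PS_mult_Mon[OF step(1) g] .
  then have "psc c (\<lambda>z. x z * g z) + (\<lambda>z. y z * g z) \<in> PS Z (E1 + E2)"
    using step(2) by (intro P.span_add P.span_scale)
  moreover have "psc c (\<lambda>z. x z * g z) + (\<lambda>z. y z * g z) = (\<lambda>xa. (psc c x + y) xa * g xa)"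
    by (simp add: psc_def fun_eq_iff algebra_simps)
  ultimately show ?case by simp
qed

lemma PS_power:
  assumes "f \<in> PS Z E"
  shows "(\<lambda>x. f x ^ k) \<in> PS Z (k * E)"
proof (induction k)
  case 0 then show ?case using PS_const[of 1] by simp
next
  case (Suc k)
  have "(\<lambda>x. f x * f x ^ k) \<in> PS Z (E + k * E)" using PS_mult[OF assms Suc] .
  then show ?case by simp
qed

lemma PS_prod:
  assumes "finite I" "\<And>i. i \<in> I \<Longrightarrow> f i \<in> PS Z (E i)"
  shows "(\<lambda>x. \<Prod>i\<in>I. f i x) \<in> PS Z (\<Sum>i\<in>I. E i)"
  using assms
proof (induction I rule: finite_induct)
  case empty then show ?case using PS_const[of 1] by simp
next
  case (insert a I)
  have "(\<lambda>x. f a x * (\<Prod>i\<in>I. f i x)) \<in> PS Z (E a + (\<Sum>i\<in>I. E i))"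
    using insert by (intro PS_mult) auto
  then show ?case using insert by simp
qed

lemma dep:
  fixes f :: "'a \<Rightarrow> ('v \<Rightarrow> 'k::field) \<Rightarrow> 'k"
  assumes Z: "finite Z" and I: "finite I" and fI: "\<And>a. a \<in> I \<Longrightarrow> f a \<in> PS Z E"
    and card: "(E+1) ^ card Z < card I"
  shows "\<exists>c. (\<exists>a\<in>I. c a \<noteq> 0) \<and> (\<forall>x. (\<Sum>a\<in>I. c a * f a x) = 0)"
proof (cases "inj_on f I")
  case False
  then obtain a b where ab: "a \<in> I" "b \<in> I" "a \<noteq> b" "f a = f b" unfolding inj_on_def by blast
  define c where "c = (\<lambda>g. if g = a then 1 else if g = b then -1 else (0::'k))"
  have "(\<Sum>g\<in>I. c g * f g x) = 0" for x
  proof -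
    have "(\<Sum>g\<in>I. c g * f g x) = (\<Sum>g\<in>I. (if g = a then f a x else 0) + (if g = b then - f b x else 0))"
      by (rule sum.cong[OF refl]) (simp add: c_def ab(3))
    also have "\<dots> = f a x - f b x" using ab I by (simp add: sum.distrib)
    finally show ?thesis using ab by simp
  qed
  moreover have "c a \<noteq> 0" by (simp add: c_def)
  ultimately show ?thesis using ab by blast
next
  case True
  have cI: "card (f ` I) = card I" using card_image[OF True] .
  have sub: "f ` I \<subseteq> PS Z E" using fI by auto
  have "\<not> P.independent (f ` I)"
  proof
    assume "P.independent (f ` I)"
    from P.independent_span_bound[OF conjunct1[OF Mon_card[OF Z]] this sub]
    have "card (f ` I) \<le> card (Mon Z E :: (('v \<Rightarrow> 'k) \<Rightarrow> 'k) set)" by (rule conjunct2)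
    moreover have "card (Mon Z E :: (('v \<Rightarrow> 'k) \<Rightarrow> 'k) set) \<le> (E+1)^card Z"
      using Mon_card[OF Z] by blast
    ultimately show False using card cI by linarith
  qed
  then obtain t u where t: "finite t" "t \<subseteq> f ` I" "(\<Sum>v\<in>t. psc (u v) v) = 0" and tv: "\<exists>v\<in>t. u v \<noteq> 0"
    unfolding P.dependent_explicit by blast
  define c where "c = (\<lambda>a. if f a \<in> t then u (f a) else 0)"
  have "(\<Sum>a\<in>I. c a * f a x) = 0" for x
  proof -
    define g where "g = (\<lambda>v. if v \<in> t then u v * v x else 0)"
    have "(\<Sum>a\<in>I. c a * f a x) = (\<Sum>a\<in>I. g (f a))"
      by (rule sum.cong[OF refl]) (simp add: c_def g_def)
    also have "\<dots> = (\<Sum>v\<in>f ` I. g v)"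
      by (simp add: sum.reindex[OF True])
    also have "\<dots> = (\<Sum>v\<in>t. g v)"
      by (rule sum.mono_neutral_right) (use t I in \<open>auto simp: g_def\<close>)
    also have "\<dots> = (\<Sum>v\<in>t. u v * v x)"
      by (rule sum.cong[OF refl]) (simp add: g_def)
    also have "\<dots> = (\<Sum>v\<in>t. psc (u v) v) x" by (simp add: sum_fapp psc_def)
    finally show ?thesis using t by simp
  qed
  moreover obtain v where "v \<in> t" "u v \<noteq> 0" using tv by blast
  then obtain a where "a \<in> I" "f a = v" using t by blast
  then have "c a \<noteq> 0" using \<open>v \<in> t\<close> \<open>u v \<noteq> 0\<close> by (simp add: c_def)
  ultimately show ?thesis using \<open>a \<in> I\<close> by blast
qed

lemma inf_field: "infinite (UNIV :: 'k::alg_closed_field set)"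
proof
  assume fin: "finite (UNIV :: 'k set)"
  define q where "q = card (UNIV :: 'k set)"
  define N where "N = (UNIV :: 'k set) - {0}"
  have finN: "finite N" using fin by (simp add: N_def)
  have q2: "q \<ge> 2"
  proof -
    have "{0, 1::'k} \<subseteq> UNIV" by simp
    then have "card {0, 1::'k} \<le> q" unfolding q_def using fin by (rule card_mono[rotated])
    then show ?thesis by simp
  qed
  have cN: "card N = q - 1" using fin by (simp add: N_def q_def card_Diff_singleton)
  have ferm: "x ^ q = x" for x :: 'k
  proof (cases "x = 0")
    case True then show ?thesis using q2 by simp
  next
    case False
    have bij: "bij_betw (\<lambda>y. x * y) N N"
      unfolding bij_betw_def
    proof
      show "inj_on (\<lambda>y. x * y) N" using False by (auto simp: inj_on_def)
      show "(\<lambda>y. x * y) ` N = N"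
      proof
        show "(\<lambda>y. x * y) ` N \<subseteq> N" using False by (auto simp: N_def)
        show "N \<subseteq> (\<lambda>y. x * y) ` N"
        proof
          fix y assume "y \<in> N"
          then have "y = x * (y / x)" "y / x \<in> N" using False by (auto simp: N_def)
          then show "y \<in> (\<lambda>y. x * y) ` N" by blast
        qed
      qed
    qed
    have "(\<Prod>y\<in>N. x * y) = (\<Prod>y\<in>N. y)"
      using prod.reindex_bij_betw[OF bij, of "\<lambda>y. y"] by simp
    moreover have "(\<Prod>y\<in>N. x * y) = x ^ card N * (\<Prod>y\<in>N. y)"
      by (simp add: prod.distrib)
    moreover have "(\<Prod>y\<in>N. y) \<noteq> 0" using finN by (simp add: N_def)
    ultimately have "x ^ card N = 1" by simp
    then have "x ^ (q - 1) = 1" using cN by simp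
    moreover have "x ^ q = x * x ^ (q - 1)" using q2 by (cases q) auto
    ultimately show ?thesis by simp
  qed
  define c where "c = (\<lambda>i::nat. if i = 0 then 1 else if i = 1 then -1 else (0::'k))"
  have q0: "q > 0" using q2 by simp
  obtain x where x: "x ^ q + (\<Sum>i<q. c i * x ^ i) = 0"
    using alg_closed[OF q0, of c] by blast
  have "(\<Sum>i<q. c i * x ^ i) = (\<Sum>i<q. (if i = 0 then 1 else 0) + (if i = 1 then - x else 0))"
    by (rule sum.cong[OF refl]) (simp add: c_def)
  also have "\<dots> = 1 - x" using q2 by (simp add: sum.distrib)
  finally show False using x ferm by simp
qed

lemma roots_finite:
  fixes a :: "nat \<Rightarrow> 'k::field"
  shows "a n \<noteq> 0 \<Longrightarrow> finite {t. (\<Sum>e\<le>n. a e * t ^ e) = 0}"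
proof (induction n arbitrary: a)
  case 0 then show ?case by simp
next
  case (Suc n)
  show ?case
  proof (cases "\<exists>t0. (\<Sum>e\<le>Suc n. a e * t0 ^ e) = 0")
    case False then show ?thesis by simp
  next
    case True
    then obtain t0 where t0: "(\<Sum>e\<le>Suc n. a e * t0 ^ e) = 0" by blast
    define b where "b i = (\<Sum>e\<in>{Suc i..Suc n}. a e * t0 ^ (e - Suc i))" for i
    have bn: "b n = a (Suc n)" by (simp add: b_def)
    have key: "(\<Sum>e\<le>Suc n. a e * t ^ e) = (t - t0) * (\<Sum>i\<le>n. b i * t ^ i)" for t
    proof -
      have "(\<Sum>e\<le>Suc n. a e * t ^ e) = (\<Sum>e\<le>Suc n. a e * t ^ e) - (\<Sum>e\<le>Suc n. a e * t0 ^ e)"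
        using t0 by simp
      also have "\<dots> = (\<Sum>e\<le>Suc n. a e * (t ^ e - t0 ^ e))"
        by (simp add: sum_subtractf right_diff_distrib)
      also have "\<dots> = (\<Sum>e\<le>Suc n. (t - t0) * (\<Sum>i<e. a e * t0 ^ (e - Suc i) * t ^ i))"
        by (rule sum.cong[OF refl]) (simp add: power_diff_sumr2 sum_distrib_left algebra_simps)
      also have "\<dots> = (t - t0) * (\<Sum>e\<le>Suc n. \<Sum>i<e. a e * t0 ^ (e - Suc i) * t ^ i)"
        by (rule sum_distrib_left[symmetric])
      also have "(\<Sum>e\<le>Suc n. \<Sum>i<e. a e * t0 ^ (e - Suc i) * t ^ i)
           = (\<Sum>i<Suc n. \<Sum>e\<in>{Suc i..Suc n}. a e * t0 ^ (e - Suc i) * t ^ i)"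
        by (rule sum.nested_swap')
      also have "\<dots> = (\<Sum>i\<le>n. \<Sum>e\<in>{Suc i..Suc n}. a e * t0 ^ (e - Suc i) * t ^ i)"
        by (simp only: lessThan_Suc_atMost)
      also have "\<dots> = (\<Sum>i\<le>n. b i * t ^ i)"
        by (simp only: b_def sum_distrib_right)
      finally show ?thesis .
    qed
    have "{t. (\<Sum>e\<le>Suc n. a e * t ^ e) = 0} \<subseteq> insert t0 {t. (\<Sum>i\<le>n. b i * t ^ i) = 0}"
      using key by auto
    moreover have "finite {t. (\<Sum>i\<le>n. b i * t ^ i) = 0}"
      using Suc.IH[of b] bn Suc.prems by simp
    ultimately show ?thesis by (meson finite_insert finite_subset)
  qed
qed

lemma roots_finite2:
  fixes a :: "nat \<Rightarrow> 'k::field"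
  shows "\<exists>e\<le>K. a e \<noteq> 0 \<Longrightarrow> finite {t. (\<Sum>e\<le>K. a e * t ^ e) = 0}"
proof (induction K)
  case 0 then show ?case using roots_finite[of a 0] by simp
next
  case (Suc K)
  show ?case
  proof (cases "a (Suc K) = 0")
    case False then show ?thesis by (rule roots_finite)
  next
    case True
    then have "\<exists>e\<le>K. a e \<noteq> 0" using Suc.prems le_Suc_eq by auto
    then show ?thesis using Suc.IH True by simp
  qed
qed

definition kron :: "nat \<Rightarrow> nat \<Rightarrow> (nat \<Rightarrow> nat) \<Rightarrow> nat" where
  "kron D n a = (\<Sum>i<n. a i * D ^ i)"

lemma kron_Suc: "kron D (Suc n) a = a 0 + D * kron D n (\<lambda>i. a (Suc i))"
  unfolding kron_def sum.lessThan_Suc_shift sum_distrib_left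
  by (simp add: mult.left_commute)

lemma kron_inj_aux:
  "(\<forall>i<n. a i < D) \<Longrightarrow> (\<forall>i<n. b i < D) \<Longrightarrow> kron D n a = kron D n b \<Longrightarrow> \<forall>i<n. a i = b i"
proof (induction n arbitrary: a b)
  case 0 then show ?case by simp
next
  case (Suc n)
  have a0: "a 0 < D" "b 0 < D" using Suc.prems by auto
  define X where "X = kron D n (\<lambda>i. a (Suc i))"
  define Y where "Y = kron D n (\<lambda>i. b (Suc i))"
  have eq: "a 0 + D * X = b 0 + D * Y"
    using Suc.prems(3) unfolding X_def Y_def kron_Suc .
  have m1: "(a 0 + D * X) mod D = a 0" using a0 by simp
  have m2: "(b 0 + D * Y) mod D = b 0" using a0 by simp
  have h0: "a 0 = b 0" using m1 m2 eq by simp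
  then have "D * X = D * Y" using eq by simp
  moreover have "D > 0" using a0 by simp
  ultimately have "X = Y" by simp
  moreover have "\<forall>i<n. a (Suc i) < D" "\<forall>i<n. b (Suc i) < D" using Suc.prems by auto
  ultimately have hs: "\<forall>i<n. a (Suc i) = b (Suc i)"
    using Suc.IH[of "\<lambda>i. a (Suc i)" "\<lambda>i. b (Suc i)"] unfolding X_def Y_def by blast
  show ?case
  proof (intro allI impI)
    fix i assume "i < Suc n"
    then show "a i = b i" using h0 hs by (cases i) auto
  qed
qed

lemma kron_inj: "inj_on (kron D n) (PiE {..<n} (\<lambda>_. {..<D}))"
proof (rule inj_onI)
  fix a b assume a: "a \<in> PiE {..<n} (\<lambda>_. {..<D})" and b: "b \<in> PiE {..<n} (\<lambda>_. {..<D})"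
    and e: "kron D n a = kron D n b"
  have "\<forall>i<n. a i = b i" using kron_inj_aux[OF _ _ e] a b by auto
  then show "a = b" using a b by (intro PiE_ext) auto
qed

lemma kron_finite_roots:
  fixes c :: "(nat \<Rightarrow> nat) \<Rightarrow> 'k::field"
  assumes a0: "a0 \<in> PiE {..<n} (\<lambda>_. {..<D})" and c0: "c a0 \<noteq> 0"
  shows "finite {t. (\<Sum>a\<in>PiE {..<n} (\<lambda>_. {..<D}). c a * (\<Prod>i<n. (t ^ (D ^ i)) ^ a i)) = 0}"
proof -
  let ?B = "PiE {..<n} (\<lambda>_. {..<D})"
  have finB: "finite ?B" by (simp add: finite_PiE)
  define K where "K = Max (kron D n ` ?B)"
  have kK: "kron D n a \<le> K" if "a \<in> ?B" for a
    unfolding K_def using finB that by (intro Max_ge) auto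
  define A where "A e = (\<Sum>a\<in>?B. if kron D n a = e then c a else 0)" for e
  have pt: "(\<Sum>a\<in>?B. c a * (\<Prod>i<n. (t ^ (D ^ i)) ^ a i)) = (\<Sum>e\<le>K. A e * t ^ e)" for t :: 'k
  proof -
    have pw: "t ^ kron D n a = (\<Prod>i<n. (t ^ (D ^ i)) ^ a i)" for a
      by (simp add: kron_def power_sum power_mult[symmetric] mult.commute)
    have "(\<Sum>e\<le>K. A e * t ^ e) = (\<Sum>e\<le>K. \<Sum>a\<in>?B. if e = kron D n a then c a * t ^ kron D n a else 0)"
      unfolding A_def sum_distrib_right by (rule sum.cong[OF refl], rule sum.cong[OF refl]) auto
    also have "\<dots> = (\<Sum>a\<in>?B. \<Sum>e\<le>K. if e = kron D n a then c a * t ^ kron D n a else 0)"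
      by (rule sum.swap)
    also have "\<dots> = (\<Sum>a\<in>?B. c a * t ^ kron D n a)"
      by (rule sum.cong[OF refl]) (use kK in simp)
    finally show ?thesis by (simp add: pw)
  qed
  have "A (kron D n a0) = (\<Sum>a\<in>?B. if a = a0 then c a else 0)"
    unfolding A_def
    by (rule sum.cong[OF refl]) (use kron_inj[of D n] a0 in \<open>auto simp: inj_on_def\<close>)
  also have "\<dots> = c a0" using a0 finB by simp
  finally have "\<exists>e\<le>K. A e \<noteq> 0" using c0 kK[OF a0] by auto
  then have "finite {t. (\<Sum>e\<le>K. A e * t ^ e) = 0}" by (rule roots_finite2)
  then show ?thesis by (simp add: pt)
qed

lemma arith_bound:
  fixes n s :: nat
  assumes "s < n"
  defines "D \<equiv> (3 * n) ^ (n - 1) + 1"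
  shows "(2 * n * D + 1) ^ s < D ^ n"
proof -
  have n1: "n \<ge> 1" using assms by simp
  have D1: "D \<ge> 1" by (simp add: D_def)
  have "1 \<le> n * D" using n1 D1 by simp
  then have "2 * n * D + 1 \<le> 3 * n * D" by simp
  then have "(2 * n * D + 1) ^ s \<le> (3 * n * D) ^ s" by (rule power_mono) simp
  also have "\<dots> \<le> (3 * n * D) ^ (n - 1)"
    using assms \<open>1 \<le> n * D\<close> by (intro power_increasing) auto
  also have "\<dots> = (3 * n) ^ (n - 1) * D ^ (n - 1)" by (simp add: power_mult_distrib)
  also have "\<dots> < D * D ^ (n - 1)"
    using D1 by (intro mult_strict_right_mono) (auto simp: D_def)
  also have "\<dots> = D ^ n" using n1 by (cases n) auto
  finally show ?thesis .
qed

lemma avoid_abstract: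
  fixes Phi :: "'s \<Rightarrow> ('v \<Rightarrow> 'k::alg_closed_field) \<Rightarrow> nat \<Rightarrow> 'k" and Z :: "'s \<Rightarrow> 'v set"
  assumes fin: "finite SS" and Z: "\<And>S. S \<in> SS \<Longrightarrow> finite (Z S) \<and> card (Z S) < n"
    and pol: "\<And>S l. S \<in> SS \<Longrightarrow> l < n \<Longrightarrow> (\<lambda>x. Phi S x l) \<in> PS (Z S) 2"
  shows "\<exists>u\<in>kvec n. \<forall>S\<in>SS. \<forall>x. Phi S x \<noteq> u"
proof -
  define D where "D = (3 * n) ^ (n - 1) + 1"
  define B where "B = PiE {..<n} (\<lambda>_. {..<D})"
  have finB: "finite B" by (simp add: B_def finite_PiE)
  have cardB: "card B = D ^ n" by (simp add: B_def card_PiE)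
  have "\<forall>S\<in>SS. \<exists>c. (\<exists>a\<in>B. c a \<noteq> 0) \<and> (\<forall>x. (\<Sum>a\<in>B. c a * (\<Prod>i<n. Phi S x i ^ a i)) = 0)"
  proof
    fix S assume S: "S \<in> SS"
    have fa: "(\<lambda>x. \<Prod>i<n. Phi S x i ^ a i) \<in> PS (Z S) (2 * n * D)" if a: "a \<in> B" for a
    proof -
      have ps: "(\<lambda>x. \<Prod>i<n. Phi S x i ^ a i) \<in> PS (Z S) (\<Sum>i<n. a i * 2)"
      proof (rule PS_prod)
        fix i assume "i \<in> {..<n}"
        then show "(\<lambda>x. Phi S x i ^ a i) \<in> PS (Z S) (a i * 2)" using S pol by (intro PS_power) auto
      qed simp
      have ai: "a i < D" if "i < n" for i using a that unfolding B_def PiE_iff by auto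
      have "(\<Sum>i<n. a i * 2) \<le> (\<Sum>i<n. D * 2)"
        by (rule sum_mono) (use ai in \<open>simp add: less_imp_le\<close>)
      also have "\<dots> = 2 * n * D" by simp
      finally have le: "(\<Sum>i<n. a i * 2) \<le> 2 * n * D" .
      show ?thesis by (rule PS_mono[OF le ps])
    qed
    have cZ: "card (Z S) < n" using Z[OF S] by blast
    have "(2 * n * D + 1) ^ card (Z S) < card B"
      unfolding cardB D_def using cZ by (rule arith_bound)
    from dep[of "Z S" B "\<lambda>a x. \<Prod>i<n. Phi S x i ^ a i" "2 * n * D", OF conjunct1[OF Z[OF S]] finB fa this]
    show "\<exists>c. (\<exists>a\<in>B. c a \<noteq> 0) \<and> (\<forall>x. (\<Sum>a\<in>B. c a * (\<Prod>i<n. Phi S x i ^ a i)) = 0)"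
      by simp
  qed
  from bchoice[OF this] obtain C where C0: "\<forall>S\<in>SS. (\<exists>a\<in>B. C S a \<noteq> 0) \<and> (\<forall>x. (\<Sum>a\<in>B. C S a * (\<Prod>i<n. Phi S x i ^ a i)) = 0)"
    by blast
  have C: "(\<exists>a\<in>B. C S a \<noteq> 0) \<and> (\<forall>x. (\<Sum>a\<in>B. C S a * (\<Prod>i<n. Phi S x i ^ a i)) = 0)" if "S \<in> SS" for S
    using C0 that by blast
  define R where "R S = {t. (\<Sum>a\<in>B. C S a * (\<Prod>i<n. (t ^ (D ^ i)) ^ a i)) = 0}" for S
  have "finite (R S)" if S: "S \<in> SS" for S
  proof -
    obtain a0 where "a0 \<in> B" "C S a0 \<noteq> 0" using C[OF S] by blast
    then show ?thesis unfolding R_def B_def by (rule kron_finite_roots)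
  qed
  then have "finite (\<Union>S\<in>SS. R S)" using fin by (intro finite_UN_I)
  from ex_new_if_finite[OF inf_field this] obtain t where t: "t \<notin> (\<Union>S\<in>SS. R S)" by blast
  define u where "u = (\<lambda>l. if l < n then t ^ (D ^ l) else 0)"
  have "u \<in> kvec n" by (simp add: u_def kvec_def)
  moreover have "\<forall>S\<in>SS. \<forall>x. Phi S x \<noteq> u"
  proof (intro ballI allI notI)
    fix S x assume S: "S \<in> SS" and e: "Phi S x = u"
    have "(\<Sum>a\<in>B. C S a * (\<Prod>i<n. Phi S x i ^ a i)) = (\<Sum>a\<in>B. C S a * (\<Prod>i<n. (t ^ (D ^ i)) ^ a i))"
      by (intro sum.cong refl arg_cong2[where f = "(*)"] prod.cong) (simp_all add: e u_def)
    then have "t \<in> R S" using C[OF S] by (simp add: R_def)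
    then show False using t S by blast
  qed
  ultimately show ?thesis by blast
qed

interpretation T: vector_space "sc2 :: 'k::field \<Rightarrow> (nat \<Rightarrow> nat \<Rightarrow> 'k) \<Rightarrow> _"
  by unfold_locales (auto simp: sc2_def fun_eq_iff algebra_simps)

lemma sc2_app[simp]: "sc2 c t i j = c * t i j" by (simp add: sc2_def)

lemma matapp_add: "matapp m n A (x + y) = matapp m n A x + matapp m n A y"
  by (auto simp: matapp_def fun_eq_iff algebra_simps sum.distrib)

lemma matapp_sc: "matapp m n A (sc c x) = sc c (matapp m n A x)"
  by (auto simp: matapp_def fun_eq_iff algebra_simps sum_distrib_left)

lemma matapp_zero: "matapp m n A 0 = 0"
  by (auto simp: matapp_def fun_eq_iff)

lemma matapp_kvec: "matapp m n A x \<in> kvec m"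
  by (simp add: matapp_def kvec_def)

lemma psi_add: "psi r M (t1 + t2) = psi r M t1 + psi r M t2"
  by (simp add: psi_def arrow_def matapp_add fun_eq_iff sum.distrib)

lemma psi_sc2: "psi r M (sc2 c t) = sc c (psi r M t)"
proof -
  have h: "sc2 c t i = sc c (t i)" for i by (simp add: fun_eq_iff)
  show ?thesis unfolding psi_def arrow_def h matapp_sc by (simp add: fun_eq_iff sum_distrib_left)
qed

lemma psi_zero: "psi r M 0 = 0"
proof -
  have "(0::nat \<Rightarrow> nat \<Rightarrow> 'a) i = 0" for i by simp
  then show ?thesis by (simp add: psi_def arrow_def matapp_zero fun_eq_iff)
qed

lemma psi_sum: "psi r M (\<Sum>a\<in>A. f a) = (\<Sum>a\<in>A. psi r M (f a))"
proof (induction A rule: infinite_finite_induct)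
  case (infinite A) then show ?case by (simp only: sum.infinite[OF infinite] psi_zero)
next
  case empty then show ?case by (simp only: sum.empty psi_zero)
next
  case (insert x F) then show ?case by (simp only: sum.insert[OF insert.hyps] psi_add insert.IH)
qed

lemma psi_diff: "psi r M (t1 - t2) = psi r M t1 - psi r M t2"
proof -
  have "psi r M t1 = psi r M ((t1 - t2) + t2)" by simp
  then have "psi r M t1 = psi r M (t1 - t2) + psi r M t2" by (simp only: psi_add)
  then show ?thesis by (metis add_diff_cancel_right')
qed

lemma psi_kvec: "psi r M t \<in> kvec (dim2 M)"
  by (simp add: psi_def arrow_def matapp_def kvec_def)

lemma psi_tens: "psi r M (tens a b) l =
   (if l < dim2 M then (\<Sum>i<r. \<Sum>j<dim1 M. arr M i l j * (a i * b j)) else 0)"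
  by (simp add: psi_def arrow_def matapp_def tens_def)

definition Zc :: "nat \<Rightarrow> nat \<Rightarrow> (nat \<Rightarrow> 'k) set \<Rightarrow> nat set \<Rightarrow> ((nat \<times> nat) + ((nat \<times> nat) + (nat \<Rightarrow> 'k))) set" where
  "Zc r m Us S = Inl ` (S \<times> ({..<r} - S)) \<union> Inr ` Inl ` (S \<times> {..<m}) \<union> Inr ` Inr ` Us"

definition wv :: "nat \<Rightarrow> nat set \<Rightarrow> ((nat \<times> nat) + ((nat \<times> nat) + (nat \<Rightarrow> 'k))  \<Rightarrow> 'k::field) \<Rightarrow> nat \<Rightarrow> nat \<Rightarrow> 'k" where
  "wv r S x s = (\<lambda>l. if l = s then 1 else if l \<in> {..<r} - S then x (Inl (s, l)) else 0)"

definition mv :: "nat \<Rightarrow> ((nat \<times> nat) + ((nat \<times> nat) + (nat \<Rightarrow> 'k))  \<Rightarrow> 'k::field) \<Rightarrow> nat \<Rightarrow> nat \<Rightarrow> 'k" where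
  "mv m x s = (\<lambda>j. if j < m then x (Inr (Inl (s, j))) else 0)"

definition Phi :: "nat \<Rightarrow> 'k::field krep \<Rightarrow> (nat \<Rightarrow> 'k) set \<Rightarrow> nat set \<Rightarrow> ((nat \<times> nat) + ((nat \<times> nat) + (nat \<Rightarrow> 'k)) \<Rightarrow> 'k) \<Rightarrow> nat \<Rightarrow> 'k" where
  "Phi r M Us S x = (\<Sum>s\<in>S. psi r M (tens (wv r S x s) (mv (dim1 M) x s))) + (\<Sum>u\<in>Us. sc (x (Inr (Inr u))) u)"

lemma card_Zc:
  fixes Us :: "(nat \<Rightarrow> 'k) set"
  assumes "S \<subseteq> {..<r}" "finite Us"
  shows "finite (Zc r m Us S) \<and> card (Zc r m Us S) = card S * (r - card S) + card S * m + card Us"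
proof -
  have fS: "finite S" using assms(1) finite_subset by blast
  define A1 where "A1 = (Inl ` (S \<times> ({..<r} - S)) :: ((nat \<times> nat) + ((nat \<times> nat) + (nat \<Rightarrow> 'k))) set)"
  define A2 where "A2 = (Inr ` Inl ` (S \<times> {..<m}) :: ((nat \<times> nat) + ((nat \<times> nat) + (nat \<Rightarrow> 'k))) set)"
  define A3 where "A3 = (Inr ` Inr ` Us :: ((nat \<times> nat) + ((nat \<times> nat) + (nat \<Rightarrow> 'k))) set)"
  have Z: "Zc r m Us S = A1 \<union> A2 \<union> A3" by (simp add: Zc_def A1_def A2_def A3_def)
  have c1: "card A1 = card S * (r - card S)"
    unfolding A1_def using assms(1) fS by (simp add: card_image card_cartesian_product card_Diff_subset)
  have c2: "card A2 = card S * m"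
    unfolding A2_def by (simp add: card_image card_cartesian_product inj_on_def)
  have c3: "card A3 = card Us"
    unfolding A3_def by (simp add: card_image inj_on_def)
  have f1: "finite A1" using fS by (simp add: A1_def)
  have f2: "finite A2" using fS by (simp add: A2_def)
  have f3: "finite A3" using assms(2) by (simp add: A3_def)
  have d12: "A1 \<inter> A2 = {}" by (auto simp: A1_def A2_def)
  have d3: "(A1 \<union> A2) \<inter> A3 = {}" by (auto simp: A1_def A2_def A3_def)
  have "card (Zc r m Us S) = card (A1 \<union> A2) + card A3"
    unfolding Z using f1 f2 f3 d3 by (intro card_Un_disjoint) auto
  also have "card (A1 \<union> A2) = card A1 + card A2"
    using f1 f2 d12 by (rule card_Un_disjoint)
  finally show ?thesis using c1 c2 c3 f1 f2 f3 Z by simp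
qed

lemma Phi_coord:
  "(\<lambda>x. Phi r M Us S x l) = (\<lambda>x. (\<Sum>s\<in>S. (if l < dim2 M then (\<Sum>i<r. \<Sum>j<dim1 M. arr M i l j * (wv r S x s i * mv (dim1 M) x s j)) else 0))
      + (\<Sum>u\<in>Us. u l * x (Inr (Inr u))))"
  by (simp add: Phi_def sum_fapp psi_tens mult.commute)

lemma Phi_poly:
  assumes S: "S \<subseteq> {..<r}" and Us: "finite Us"
  shows "(\<lambda>x. Phi r M Us S x l) \<in> PS (Zc r (dim1 M) Us S) 2"
proof -
  let ?Z = "Zc r (dim1 M) Us S"
  have fZ: "finite ?Z" using card_Zc[OF S Us] by blast
  have w: "(\<lambda>x. wv r S x s i) \<in> PS ?Z 1" if s: "s \<in> S" for s i
  proof (cases "i = s")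
    case True then show ?thesis using PS_const[of 1] by (simp add: wv_def)
  next
    case False
    show ?thesis
    proof (cases "i \<in> {..<r} - S")
      case True
      then have "Inl (s, i) \<in> ?Z" using s by (auto simp: Zc_def)
      then show ?thesis using False True PS_var[OF fZ, of "Inl (s, i)" 1] by (simp add: wv_def)
    next
      case F2: False
      have eq: "(\<lambda>x. wv r S x s i) = (\<lambda>x. 0)" unfolding wv_def using False F2 by auto
      show ?thesis unfolding eq by (rule PS_const)
    qed
  qed
  have mm: "(\<lambda>x. mv (dim1 M) x s j) \<in> PS ?Z 1" if s: "s \<in> S" and j: "j < dim1 M" for s j
  proof -
    have "Inr (Inl (s, j)) \<in> ?Z" using s j by (auto simp: Zc_def)
    then show ?thesis using j PS_var[OF fZ, of "Inr (Inl (s, j))" 1] by (simp add: mv_def)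
  qed
  have prod: "(\<lambda>x. arr M i l j * (wv r S x s i * mv (dim1 M) x s j)) \<in> PS ?Z 2"
    if s: "s \<in> S" and j: "j < dim1 M" for s i j
  proof -
    have h: "(\<lambda>x. wv r S x s i * mv (dim1 M) x s j) \<in> PS ?Z 2"
      using PS_mult[OF w[OF s] mm[OF s j]] by (simp only: one_add_one)
    show ?thesis by (rule PS_scale[OF h])
  qed
  have A: "(\<lambda>x. \<Sum>s\<in>S. (if l < dim2 M then (\<Sum>i<r. \<Sum>j<dim1 M. arr M i l j * (wv r S x s i * mv (dim1 M) x s j)) else 0)) \<in> PS ?Z 2"
  proof (cases "l < dim2 M")
    case True
    then show ?thesis
      by (simp, intro PS_sum) (rule prod, simp_all)
  next
    case False
    then show ?thesis using PS_const[of 0] by simp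
  qed
  have B: "(\<lambda>x. \<Sum>u\<in>Us. u l * x (Inr (Inr u))) \<in> PS ?Z 2"
  proof (rule PS_sum)
    fix u assume "u \<in> Us"
    then have "Inr (Inr u) \<in> ?Z" by (auto simp: Zc_def)
    then have "(\<lambda>x. x (Inr (Inr u))) \<in> PS ?Z 2" by (rule PS_var[OF fZ]) simp
    then show "(\<lambda>x. u l * x (Inr (Inr u))) \<in> PS ?Z 2" by (rule PS_scale)
  qed
  show ?thesis unfolding Phi_coord by (rule PS_add[OF A B])
qed

lemma tensor_form:
  fixes M :: "'k::field krep"
  assumes w: "\<forall>s\<in>S. w s \<in> V" and rep: "\<forall>v\<in>V. v = (\<Sum>s\<in>S. sc (v s) (w s))"
    and t: "t \<in> tensor_sub M V"
  shows "\<exists>ms. (\<forall>s. ms s \<in> kvec (dim1 M)) \<and> t = (\<Sum>s\<in>S. tens (w s) (ms s))"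
proof -
  from t have "t \<in> T.span {tens a m | a m. a \<in> V \<and> m \<in> kvec (dim1 M)}" by (simp add: tensor_sub_def)
  then show ?thesis
  proof (induction rule: T.span_induct_alt)
    case base
    have e: "(0 :: nat \<Rightarrow> nat \<Rightarrow> 'k) = (\<Sum>s\<in>S. tens (w s) ((\<lambda>_ _. 0) s))"
      by (simp add: tens_def fun_eq_iff sum_fapp)
    have k: "\<forall>s. (\<lambda>_ _. 0) s \<in> kvec (dim1 M)" by (simp add: kvec_def)
    show ?case by (rule exI[of _ "\<lambda>_ _. 0"], rule conjI, fact k, fact e)
  next
    case (step c x y)
    obtain a m0 where x: "x = tens a m0" "a \<in> V" "m0 \<in> kvec (dim1 M)" using step(1) by blast
    obtain ms where ms: "\<forall>s. ms s \<in> kvec (dim1 M)" "y = (\<Sum>s\<in>S. tens (w s) (ms s))" using step(2) by blast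
    define ms' where "ms' s = sc (c * a s) m0 + ms s" for s
    have k: "ms' s \<in> kvec (dim1 M)" for s
      using x(3) ms(1) by (simp add: ms'_def kvec_def)
    have ai: "a i = (\<Sum>s\<in>S. a s * w s i)" for i
    proof -
      have "a = (\<Sum>s\<in>S. sc (a s) (w s))" using rep x(2) by blast
      then have "a i = (\<Sum>s\<in>S. sc (a s) (w s)) i" by simp
      then show ?thesis by (simp add: sum_fapp)
    qed
    have "sc2 c x + y = (\<Sum>s\<in>S. tens (w s) (ms' s))"
    proof (intro ext)
      fix i j
      have "(sc2 c x + y) i j = c * (a i * m0 j) + (\<Sum>s\<in>S. w s i * ms s j)"
        by (simp add: x ms sum_fapp tens_def)
      also have "\<dots> = c * ((\<Sum>s\<in>S. a s * w s i) * m0 j) + (\<Sum>s\<in>S. w s i * ms s j)"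
        by (subst ai) (rule refl)
      also have "\<dots> = (\<Sum>s\<in>S. w s i * (c * a s * m0 j + ms s j))"
        by (simp add: sum_distrib_left sum_distrib_right sum.distrib algebra_simps)
      also have "\<dots> = (\<Sum>s\<in>S. tens (w s) (ms' s)) i j"
        by (simp add: sum_fapp tens_def ms'_def)
      finally show "(sc2 c x + y) i j = (\<Sum>s\<in>S. tens (w s) (ms' s)) i j" .
    qed
    then show ?case using k by blast
  qed
qed

lemma rep_Phi:
  fixes M :: "'k::field krep"
  assumes V: "V \<subseteq> kvec r" "V.subspace V" "V.dim V = d" and t: "t \<in> tensor_sub M V"
    and v: "v \<in> V.span Us" and Us: "finite Us"
  shows "\<exists>S. S \<subseteq> {..<r} \<and> card S = d \<and> (\<exists>x. psi r M t + v = Phi r M Us S x)"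
proof -
  obtain S w where S: "S \<subseteq> {..<r}" and w: "\<forall>s\<in>S. w s \<in> V \<and> (\<forall>l\<in>S. w s l = (if l = s then 1 else 0))"
    and rep: "\<forall>v\<in>V. v = (\<Sum>s\<in>S. sc (v s) (w s))" and cS: "card S = V.dim V"
    using chart[OF V(1) V(2)] by blast
  obtain ms where ms: "\<forall>s. ms s \<in> kvec (dim1 M)" "t = (\<Sum>s\<in>S. tens (w s) (ms s))"
    using tensor_form[of S w V t M] w rep t by blast
  obtain cu where cu: "v = (\<Sum>u\<in>Us. sc (cu u) u)"
    using v V.span_finite[OF Us] by blast
  define x where "x = (\<lambda>z. case z of Inl (s, l) \<Rightarrow> w s l | Inr (Inl (s, j)) \<Rightarrow> ms s j | Inr (Inr u) \<Rightarrow> cu u)"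
  have wv: "wv r S x s = w s" if s: "s \<in> S" for s
  proof (rule ext)
    fix l
    show "wv r S x s l = w s l"
    proof (cases "l = s")
      case True then show ?thesis using w s by (simp add: wv_def)
    next
      case False
      show ?thesis
      proof (cases "l \<in> {..<r} - S")
        case True then show ?thesis using False by (simp add: wv_def x_def)
      next
        case F2: False
        show ?thesis
        proof (cases "l \<in> S")
          case True then show ?thesis using False w s by (auto simp: wv_def)
        next
          case F3: False
          then have "l \<ge> r" using F2 by auto
          moreover have "w s \<in> kvec r" using w s V(1) by blast
          ultimately show ?thesis using False F2 by (simp add: wv_def kvec_def)
        qed
      qed
    qed
  qed
  have mv: "mv (dim1 M) x s = ms s" for s
  proof (rule ext)
    fix j show "mv (dim1 M) x s j = ms s j"
      using ms(1) by (cases "j < dim1 M") (auto simp: mv_def x_def kvec_def)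
  qed
  have "Phi r M Us S x = (\<Sum>s\<in>S. psi r M (tens (w s) (ms s))) + (\<Sum>u\<in>Us. sc (cu u) u)"
    unfolding Phi_def using wv mv by (simp add: x_def)
  also have "\<dots> = psi r M t + v" by (simp add: ms(2) cu psi_sum)
  finally have "psi r M t + v = Phi r M Us S x" by simp
  then show ?thesis using S cS V(3) by blast
qed

lemma avoid_concrete:
  fixes M :: "'k::alg_closed_field krep"
  assumes Us: "finite Us" and cnt: "d * (r - d) + d * dim1 M + card Us < dim2 M"
  shows "\<exists>u\<in>kvec (dim2 M). \<forall>V. V \<subseteq> kvec r \<and> V.subspace V \<and> V.dim V = d \<longrightarrow>
            (\<forall>t\<in>tensor_sub M V. \<forall>v\<in>V.span Us. u \<noteq> psi r M t + v)"
proof -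
  define SS where "SS = {S. S \<subseteq> {..<r} \<and> card S = d}"
  have fin: "finite SS" unfolding SS_def
    by (rule finite_subset[of _ "Pow {..<r}"]) auto
  have Z: "finite (Zc r (dim1 M) Us S) \<and> card (Zc r (dim1 M) Us S) < dim2 M" if "S \<in> SS" for S
    using card_Zc[of S r Us "dim1 M"] that Us cnt by (auto simp: SS_def)
  have pol: "(\<lambda>x. Phi r M Us S x l) \<in> PS (Zc r (dim1 M) Us S) 2" if "S \<in> SS" "l < dim2 M" for S l
    using Phi_poly[of S r Us M l] that Us by (auto simp: SS_def)
  obtain u where u: "u \<in> kvec (dim2 M)" "\<forall>S\<in>SS. \<forall>x. Phi r M Us S x \<noteq> u"
    using avoid_abstract[of SS "Zc r (dim1 M) Us" "dim2 M" "Phi r M Us", OF fin Z pol] by blast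
  show ?thesis
  proof (intro bexI[OF _ u(1)] allI impI ballI)
    fix V t v assume V: "V \<subseteq> kvec r \<and> V.subspace V \<and> V.dim V = d" and t: "t \<in> tensor_sub M V"
      and v: "v \<in> V.span Us"
    obtain S x where "S \<subseteq> {..<r}" "card S = d" "psi r M t + v = Phi r M Us S x"
      using rep_Phi[of V r d t M v Us] V t v Us by blast
    then show "u \<noteq> psi r M t + v" using u(2) by (auto simp: SS_def)
  qed
qed

definition Gr :: "nat \<Rightarrow> nat \<Rightarrow> (nat \<Rightarrow> 'k::field) set \<Rightarrow> bool" where
  "Gr r d V \<longleftrightarrow> V \<subseteq> kvec r \<and> V.subspace V \<and> V.dim V = d"

definition Good :: "nat \<Rightarrow> nat \<Rightarrow> 'k::field krep \<Rightarrow> (nat \<Rightarrow> 'k) set \<Rightarrow> bool" where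
  "Good r d M Us \<longleftrightarrow> finite Us \<and> Us \<subseteq> kvec (dim2 M) \<and> V.independent Us \<and>
     (\<forall>V. Gr r d V \<longrightarrow> (\<forall>t\<in>tensor_sub M V. psi r M t \<in> V.span Us \<longrightarrow> psi r M t = 0))"

lemma tensor_sub_zero: "0 \<in> tensor_sub M V"
  unfolding tensor_sub_def by (rule T.span_zero)

lemma tensor_sub_scale: "t \<in> tensor_sub M V \<Longrightarrow> sc2 c t \<in> tensor_sub M V"
  unfolding tensor_sub_def by (rule T.span_scale)

lemma tensor_sub_diff: "t \<in> tensor_sub M V \<Longrightarrow> s \<in> tensor_sub M V \<Longrightarrow> t - s \<in> tensor_sub M V"
  unfolding tensor_sub_def by (rule T.span_diff)

lemma kvec_subspace: "V.subspace (kvec n :: (nat \<Rightarrow> 'k::field) set)"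
  unfolding V.subspace_def by (simp add: kvec_def)

definition ev :: "nat \<Rightarrow> nat \<Rightarrow> 'k::field" where
  "ev j = (\<lambda>l. if l = j then 1 else 0)"

lemma std_Gr:
  assumes "d \<le> r"
  shows "\<exists>V :: (nat \<Rightarrow> 'k::field) set. Gr r d V"
proof -
  define E where "E = (ev ` {..<d} :: (nat \<Rightarrow> 'k) set)"
  have evinj: "inj_on (ev :: nat \<Rightarrow> nat \<Rightarrow> 'k) UNIV"
  proof (rule inj_onI)
    fix i j assume "(ev i :: nat \<Rightarrow> 'k) = ev j"
    then have "(ev i :: nat \<Rightarrow> 'k) i = ev j i" by simp
    then show "i = j" by (auto simp: ev_def split: if_splits)
  qed
  have cE: "card E = d" unfolding E_def using evinj by (simp add: card_image inj_on_subset)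
  have ind: "V.independent E"
    unfolding V.independent_explicit_module
  proof (intro allI impI)
    fix t c v assume t: "finite t" "t \<subseteq> E" and c: "(\<Sum>v\<in>t. sc (c v) v) = 0" and v: "v \<in> t"
    then obtain j where j: "v = ev j" by (auto simp: E_def)
    have e: "v' j = (if v' = v then 1 else 0)" if vt: "v' \<in> t" for v'
    proof -
      obtain j' where v'd: "v' = ev j'" using vt t by (auto simp: E_def)
      have iff: "v' = v \<longleftrightarrow> j' = j" using evinj by (simp add: inj_eq j v'd)
      have "v' j = (if j = j' then 1 else 0)" by (simp add: v'd ev_def)
      then show ?thesis using iff by auto
    qed
    have "0 = (\<Sum>v\<in>t. sc (c v) v) j" using c by simp
    also have "\<dots> = (\<Sum>v'\<in>t. c v' * v' j)" by (simp add: sum_fapp)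
    also have "\<dots> = (\<Sum>v'\<in>t. if v' = v then c v' else 0)"
      by (rule sum.cong[OF refl]) (simp add: e)
    also have "\<dots> = c v" using v t by simp
    finally show "c v = 0" by simp
  qed
  have sub: "V.span E \<subseteq> kvec r"
    by (rule V.span_minimal[OF _ kvec_subspace]) (use assms in \<open>auto simp: E_def ev_def kvec_def\<close>)
  have "Gr r d (V.span E)"
    unfolding Gr_def using sub V.dim_span_eq_card_independent[OF ind] cE by simp
  then show ?thesis by blast
qed

lemma build_step:
  fixes M :: "'k::alg_closed_field krep"
  assumes G: "Good r d M Us" and cnt: "d * (r - d) + d * dim1 M + card Us < dim2 M" and dr: "d \<le> r"
  shows "\<exists>Us'. Good r d M Us' \<and> card Us' = Suc (card Us)"
proof -
  have fU: "finite Us" using G by (simp add: Good_def)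
  from avoid_concrete[OF fU cnt] obtain u where u: "u \<in> kvec (dim2 M)"
    and avc: "\<forall>V. V \<subseteq> kvec r \<and> V.subspace V \<and> V.dim V = d \<longrightarrow>
            (\<forall>t\<in>tensor_sub M V. \<forall>v\<in>V.span Us. u \<noteq> psi r M t + v)" by blast
  have av: "u \<noteq> psi r M t + v" if "Gr r d V" "t \<in> tensor_sub M V" "v \<in> V.span Us" for V t v
  proof -
    have "V \<subseteq> kvec r \<and> V.subspace V \<and> V.dim V = d" using that(1) by (simp add: Gr_def)
    then have "\<forall>t\<in>tensor_sub M V. \<forall>v\<in>V.span Us. u \<noteq> psi r M t + v" using avc by blast
    then show ?thesis using that(2,3) by blast
  qed
  obtain V0 :: "(nat \<Rightarrow> 'k) set" where V0: "Gr r d V0" using std_Gr[OF dr] by blast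
  have nsp: "u \<notin> V.span Us"
  proof
    assume a: "u \<in> V.span Us"
    show False using av[OF V0 tensor_sub_zero a] by (simp add: psi_zero)
  qed
  have uU: "u \<notin> Us" using nsp V.span_base by blast
  have "Good r d M (insert u Us)"
    unfolding Good_def
  proof (intro conjI allI impI ballI)
    show "finite (insert u Us)" using fU by simp
    show "insert u Us \<subseteq> kvec (dim2 M)" using G u by (simp add: Good_def)
    show "V.independent (insert u Us)"
    proof (rule V.independent_insertI[OF nsp])
      show "V.independent Us" using G by (simp add: Good_def)
    qed
    fix V t assume V: "Gr r d V" and t: "t \<in> tensor_sub M V" and p: "psi r M t \<in> V.span (insert u Us)"
    from p obtain k where k: "psi r M t - sc k u \<in> V.span Us" unfolding V.span_breakdown_eq by blast
    show "psi r M t = 0"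
    proof (cases "k = 0")
      case True
      then have "psi r M t \<in> V.span Us" using k by simp
      then show ?thesis using G V t by (simp add: Good_def)
    next
      case False
      have t': "sc2 (1 / k) t \<in> tensor_sub M V" using t by (rule tensor_sub_scale)
      have v': "sc (- 1 / k) (psi r M t - sc k u) \<in> V.span Us" using k by (rule V.span_scale)
      have "u = psi r M (sc2 (1 / k) t) + sc (- 1 / k) (psi r M t - sc k u)"
      proof (rule ext)
        fix l
        have "(psi r M (sc2 (1 / k) t) + sc (- 1 / k) (psi r M t - sc k u)) l
            = (1 / k) * psi r M t l + (- 1 / k) * (psi r M t l - k * u l)"
          by (simp only: psi_sc2 plus_fun_apply sc_app minus_apply)
        also have "\<dots> = u l" using False by (simp add: field_simps)
        finally show "u l = (psi r M (sc2 (1 / k) t) + sc (- 1 / k) (psi r M t - sc k u)) l" by simp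
      qed
      then show ?thesis using av[OF V t' v'] by simp
    qed
  qed
  moreover have "card (insert u Us) = Suc (card Us)" using fU uU by simp
  ultimately show ?thesis by blast
qed

lemma build:
  fixes M :: "'k::alg_closed_field krep"
  assumes "d * (r - d) + d * dim1 M + a = dim2 M" "d \<le> r"
  shows "j \<le> a \<Longrightarrow> \<exists>Us. Good r d M Us \<and> card Us = j"
proof (induction j)
  case 0
  have "Good r d M {}"
    unfolding Good_def by (simp add: psi_zero V.independent_empty)
  then show ?case by (intro exI[of _ "{}"]) simp
next
  case (Suc j)
  then obtain Us where Us: "Good r d M Us" "card Us = j" by auto
  have "d * (r - d) + d * dim1 M + card Us < dim2 M" using Suc.prems Us(2) assms(1) by simp
  from build_step[OF Us(1) this assms(2)] show ?case using Us(2) by simp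
qed

lemma lin_sum:
  fixes f :: "(nat \<Rightarrow> 'k::field) \<Rightarrow> (nat \<Rightarrow> 'k)"
  assumes add: "\<And>x y. f (x + y) = f x + f y"
  shows "f (\<Sum>i\<in>I. g i) = (\<Sum>i\<in>I. f (g i))"
proof -
  have z: "f 0 = 0"
  proof -
    have "f 0 = f (0 + 0)" by simp
    also have "\<dots> = f 0 + f 0" by (rule add)
    finally show ?thesis by simp
  qed
  show ?thesis
  proof (induction I rule: infinite_finite_induct)
    case (infinite A) then show ?case by (simp only: sum.infinite[OF infinite] z)
  next
    case empty then show ?case by (simp only: sum.empty z)
  next
    case (insert x F) then show ?case by (simp only: sum.insert[OF insert.hyps] add insert.IH)
  qed
qed

lemma lin_diff:
  fixes f :: "(nat \<Rightarrow> 'k::field) \<Rightarrow> (nat \<Rightarrow> 'k)"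
  assumes add: "\<And>x y. f (x + y) = f x + f y"
  shows "f (x - y) = f x - f y"
proof -
  have "f x = f ((x - y) + y)" by simp
  then have "f x = f (x - y) + f y" by (simp only: add)
  then show ?thesis by (metis add_diff_cancel_right')
qed

lemma kvec_expand:
  assumes "x \<in> kvec N"
  shows "x = (\<Sum>j<N. sc (x j) (ev j))"
proof (rule ext)
  fix l
  have "(\<Sum>j<N. sc (x j) (ev j)) l = (\<Sum>j<N. x j * ev j l)" by (simp add: sum_fapp)
  also have "\<dots> = (\<Sum>j<N. if j = l then x l else 0)" by (rule sum.cong[OF refl]) (simp add: ev_def)
  also have "\<dots> = (if l < N then x l else 0)" by simp
  also have "\<dots> = x l" using assms by (simp add: kvec_def)
  finally show "x l = (\<Sum>j<N. sc (x j) (ev j)) l" by simp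
qed

lemma mat_of:
  fixes f :: "(nat \<Rightarrow> 'k::field) \<Rightarrow> (nat \<Rightarrow> 'k)"
  assumes add: "\<And>x y. f (x + y) = f x + f y" and scl: "\<And>c x. f (sc c x) = sc c (f x)"
    and img: "\<And>x. f x \<in> kvec P" and x: "x \<in> kvec N"
  shows "matapp P N (\<lambda>i j. f (ev j) i) x = f x"
proof -
  have "f x = f (\<Sum>j<N. sc (x j) (ev j))" by (rule arg_cong[where f = f, OF kvec_expand[OF x]])
  also have "\<dots> = (\<Sum>j<N. sc (x j) (f (ev j)))" by (simp only: lin_sum[OF add] scl)
  finally have fx: "f x = (\<Sum>j<N. sc (x j) (f (ev j)))" .
  show ?thesis
  proof (rule ext)
    fix i
    show "matapp P N (\<lambda>i j. f (ev j) i) x i = f x i"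
    proof (cases "i < P")
      case True
      then show ?thesis by (simp add: matapp_def fx sum_fapp mult.commute)
    next
      case False
      then show ?thesis using img[of x] by (simp add: matapp_def kvec_def)
    qed
  qed
qed

lemma kvec0: "kvec 0 = {0 :: nat \<Rightarrow> 'k::zero}"
  by (auto simp: kvec_def fun_eq_iff)

lemma tsub_kvec:
  assumes "t \<in> tensor_sub M V"
  shows "t i \<in> kvec (dim1 M)"
proof -
  from assms have "t \<in> T.span {tens a m | a m. a \<in> V \<and> m \<in> kvec (dim1 M)}" by (simp add: tensor_sub_def)
  then show ?thesis
  proof (induction rule: T.span_induct_alt)
    case base then show ?case by (simp add: kvec_def)
  next
    case (step c x y)
    then obtain a m where "x = tens a m" "m \<in> kvec (dim1 M)" by blast
    then show ?case using step(2) by (simp add: kvec_def tens_def)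
  qed
qed

lemma main_construct:
  fixes M :: "'k::alg_closed_field krep"
  assumes G: "Good r d M Us" and cU: "card Us = a" and an: "a \<le> dim2 M" and pr: "rep_proj r d M"
  shows "\<exists>Mmin g h. short_exact r (aP0 a) M Mmin g h \<and> rep_proj r d Mmin \<and>
           dim2 Mmin = dim2 M - a \<and> dim1 Mmin = dim1 M"
proof -
  define n where "n = dim2 M"
  define m where "m = dim1 M"
  have fU: "finite Us" and UsK: "Us \<subseteq> kvec n" and indU: "V.independent Us"
    and goodU: "\<And>V t. Gr r d V \<Longrightarrow> t \<in> tensor_sub M V \<Longrightarrow> psi r M t \<in> V.span Us \<Longrightarrow> psi r M t = 0"
    using G by (simp_all add: Good_def n_def)
  define U where "U = V.span Us"
  have Usub: "U \<subseteq> kvec n" unfolding U_def by (rule V.span_minimal[OF UsK kvec_subspace])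
  have Uss: "V.subspace U" unfolding U_def by (rule V.subspace_span)
  have dU: "V.dim U = a" unfolding U_def using V.dim_span_eq_card_independent[OF indU] cU by simp
  obtain T w where T: "T \<subseteq> {..<n}" and w: "\<forall>t\<in>T. w t \<in> U \<and> (\<forall>l\<in>T. w t l = (if l = t then 1 else 0))"
    and repU: "\<forall>x\<in>U. x = (\<Sum>t\<in>T. sc (x t) (w t))" and cT0: "card T = V.dim U"
    using chart[OF Usub Uss] by blast
  have cT: "card T = a" using cT0 dU by simp
  have fT: "finite T" using T finite_subset by blast
  obtain tau where tau: "bij_betw tau {0..<a} T"
    using ex_bij_betw_nat_finite[OF fT] unfolding cT by blast
  define C where "C = {..<n} - T"
  have fC: "finite C" by (simp add: C_def)
  have cC: "card C = n - a" unfolding C_def using T fT cT by (simp add: card_Diff_subset)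
  obtain kap where kap: "bij_betw kap {0..<n - a} C"
    using ex_bij_betw_nat_finite[OF fC] unfolding cC by blast
  have wK: "w t \<in> kvec n" if "t \<in> T" for t using w that Usub by blast
  have wd: "w t l = (if l = t then 1 else 0)" if "t \<in> T" "l \<in> T" for t l using w that by blast
  define pi where "pi x = (\<lambda>i. if i < n - a then x (kap i) - (\<Sum>t\<in>T. x t * w t (kap i)) else 0)"
    for x :: "nat \<Rightarrow> 'k"
  have pi_add: "pi (x + y) = pi x + pi y" for x y
    by (rule ext) (simp add: pi_def sum.distrib algebra_simps)
  have pi_sc: "pi (sc c x) = sc c (pi x)" for c x
    by (rule ext) (simp add: pi_def sum_distrib_left algebra_simps)
  have pi_img: "pi x \<in> kvec (n - a)" for x by (simp add: pi_def kvec_def)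
  have sumT_at: "(\<Sum>t\<in>T. x t * w t t0) = x t0" if "t0 \<in> T" for x t0
  proof -
    have "(\<Sum>t\<in>T. x t * w t t0) = (\<Sum>t\<in>T. if t = t0 then x t else 0)"
      by (rule sum.cong[OF refl]) (use wd that in auto)
    also have "\<dots> = x t0" using that fT by simp
    finally show ?thesis .
  qed
  have pi0: "pi x = 0 \<longleftrightarrow> x \<in> U" if xK: "x \<in> kvec n" for x
  proof
    assume px: "pi x = 0"
    define z where "z = x - (\<Sum>t\<in>T. sc (x t) (w t))"
    have zl: "z l = x l - (\<Sum>t\<in>T. x t * w t l)" for l by (simp add: z_def sum_fapp)
    have "z l = 0" for l
    proof (cases "l \<in> T")
      case True then show ?thesis using sumT_at[of l x] by (simp add: zl)
    next
      case nT: False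
      show ?thesis
      proof (cases "l < n")
        case True
        then have "l \<in> C" using nT by (simp add: C_def)
        then obtain i where i: "i \<in> {0..<n - a}" "l = kap i" using kap unfolding bij_betw_def by blast
        have "pi x i = 0" using px by simp
        moreover have "pi x i = x (kap i) - (\<Sum>t\<in>T. x t * w t (kap i))" using i(1) by (simp add: pi_def)
        ultimately show ?thesis using i(2) zl[of l] by simp
      next
        case False
        then have "x l = 0" using xK by (simp add: kvec_def)
        moreover have "w t l = 0" if "t \<in> T" for t using wK[OF that] False by (simp add: kvec_def)
        ultimately show ?thesis by (simp add: zl)
      qed
    qed
    then have zz: "\<And>l. z l = 0" .
    have "x = (\<Sum>t\<in>T. sc (x t) (w t))"
    proof (rule ext)
      fix l
      have "x l = (\<Sum>t\<in>T. x t * w t l)" using zl[of l] zz[of l] by simp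
      also have "\<dots> = (\<Sum>t\<in>T. sc (x t) (w t)) l" by (simp only: sum_fapp sc_app)
      finally show "x l = (\<Sum>t\<in>T. sc (x t) (w t)) l" .
    qed
    also have "\<dots> \<in> U" using w Uss by (intro V.subspace_sum V.subspace_scale) auto
    finally show "x \<in> U" .
  next
    assume "x \<in> U"
    then have xe: "x = (\<Sum>t\<in>T. sc (x t) (w t))" using repU by blast
    show "pi x = 0"
    proof (rule ext)
      fix i
      have "x (kap i) = (\<Sum>t\<in>T. sc (x t) (w t)) (kap i)" by (rule fun_cong[OF xe])
      also have "\<dots> = (\<Sum>t\<in>T. x t * w t (kap i))" by (simp only: sum_fapp sc_app)
      finally have "x (kap i) = (\<Sum>t\<in>T. x t * w t (kap i))" .
      then show "pi x i = 0 i" by (simp add: pi_def)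
    qed
  qed
  have pi_surj: "pi ` kvec n = kvec (n - a)"
  proof
    show "pi ` kvec n \<subseteq> kvec (n - a)" using pi_img by blast
    show "kvec (n - a) \<subseteq> pi ` kvec n"
    proof
      fix y :: "nat \<Rightarrow> 'k" assume y: "y \<in> kvec (n - a)"
      define x where "x l = (if l \<in> C then y (the_inv_into {0..<n - a} kap l) else 0)" for l
      have xK: "x \<in> kvec n" by (auto simp: x_def kvec_def C_def)
      have xT: "x t = 0" if "t \<in> T" for t using that by (simp add: x_def C_def)
      have kinj: "inj_on kap {0..<n - a}" using kap by (simp add: bij_betw_def)
      have "pi x = y"
      proof (rule ext)
        fix i
        show "pi x i = y i"
        proof (cases "i < n - a")
          case True
          then have kc: "kap i \<in> C" using kap by (auto simp: bij_betw_def)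
          have "the_inv_into {0..<n - a} kap (kap i) = i"
            using True by (intro the_inv_into_f_f[OF kinj]) simp
          then have "x (kap i) = y i" using kc by (simp add: x_def)
          moreover have "(\<Sum>t\<in>T. x t * w t (kap i)) = 0" using xT by simp
          ultimately show ?thesis using True by (simp add: pi_def)
        next
          case False
          then show ?thesis using y by (simp add: pi_def kvec_def)
        qed
      qed
      then show "y \<in> pi ` kvec n" using xK by blast
    qed
  qed
  define Mmin :: "'k krep" where "Mmin = \<lparr>dim1 = m, dim2 = n - a, arr = (\<lambda>i p j. pi (arrow M i (ev j)) p)\<rparr>"
  have arrMmin: "arrow Mmin i x = pi (arrow M i x)" if x: "x \<in> kvec m" for i x
  proof -
    have "arrow Mmin i x = matapp (n - a) m (\<lambda>p j. pi (arrow M i (ev j)) p) x"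
      by (simp add: arrow_def Mmin_def)
    also have "\<dots> = pi (arrow M i x)"
    proof (rule mat_of[where f = "\<lambda>x. pi (arrow M i x)", OF _ _ _ x])
      show "pi (arrow M i (x + y)) = pi (arrow M i x) + pi (arrow M i y)" for x y
        by (simp only: arrow_def matapp_add pi_add)
      show "pi (arrow M i (sc c x)) = sc c (pi (arrow M i x))" for c x
        by (simp only: arrow_def matapp_sc pi_sc)
      show "pi (arrow M i x) \<in> kvec (n - a)" for x by (rule pi_img)
    qed
    finally show ?thesis .
  qed
  define H2 where "H2 = (\<lambda>i l::nat. pi (ev l) i)"
  have H2pi: "matapp (n - a) n H2 x = pi x" if "x \<in> kvec n" for x
    unfolding H2_def using mat_of[of pi, OF pi_add pi_sc pi_img that] .
  define H1 where "H1 = (\<lambda>i j::nat. if i = j then 1 else (0::'k))"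
  have H1id: "matapp m m H1 x = x" if x: "x \<in> kvec m" for x
  proof (rule ext)
    fix i
    show "matapp m m H1 x i = x i"
    proof (cases "i < m")
      case True
      have "(\<Sum>j<m. H1 i j * x j) = (\<Sum>j<m. if j = i then x i else 0)"
        by (rule sum.cong[OF refl]) (simp add: H1_def)
      also have "\<dots> = x i" using True by simp
      finally show ?thesis using True by (simp add: matapp_def)
    next
      case False then show ?thesis using x by (simp add: matapp_def kvec_def)
    qed
  qed
  define G2 where "G2 = (\<lambda>l k::nat. w (tau k) l)"
  have tauT: "tau k \<in> T" if "k < a" for k using tau that by (auto simp: bij_betw_def)
  have G2f: "matapp n a G2 y = (\<Sum>k<a. sc (y k) (w (tau k)))" for y
  proof (rule ext)
    fix l
    show "matapp n a G2 y l = (\<Sum>k<a. sc (y k) (w (tau k))) l"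
    proof (cases "l < n")
      case True then show ?thesis by (simp add: matapp_def G2_def sum_fapp mult.commute)
    next
      case False
      have "w (tau k) l = 0" if "k < a" for k using wK[OF tauT[OF that]] False by (simp add: kvec_def)
      then show ?thesis using False by (simp add: matapp_def sum_fapp)
    qed
  qed
  have tinj: "inj_on tau {..<a}" using tau by (simp add: bij_betw_def atLeast0LessThan)
  have G2at: "(\<Sum>k<a. sc (y k) (w (tau k))) (tau k0) = y k0" if "k0 < a" for y k0
  proof -
    have "(\<Sum>k<a. sc (y k) (w (tau k))) (tau k0) = (\<Sum>k<a. y k * w (tau k) (tau k0))"
      by (simp add: sum_fapp)
    also have "\<dots> = (\<Sum>k<a. if k = k0 then y k else 0)"
    proof (rule sum.cong[OF refl])
      fix k assume k: "k \<in> {..<a}"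
      have "w (tau k) (tau k0) = (if tau k0 = tau k then 1 else 0)"
        using wd[OF tauT tauT] k that by simp
      moreover have "tau k0 = tau k \<longleftrightarrow> k = k0" using tinj k that by (auto simp: inj_on_def)
      ultimately show "y k * w (tau k) (tau k0) = (if k = k0 then y k else 0)" by simp
    qed
    also have "\<dots> = y k0" using that by simp
    finally show ?thesis .
  qed
  define g :: "'k kmor" where "g = ((\<lambda>_ _. 0), G2)"
  define h :: "'k kmor" where "h = (H1, H2)"
  have m1g: "mor1 (aP0 a) M g x = 0" for x by (simp add: mor1_def aP0_def matapp_def fun_eq_iff)
  have m2g: "mor2 (aP0 a) M g = matapp n a G2" by (simp add: mor2_def aP0_def g_def n_def)
  have m1h: "mor1 M Mmin h = matapp m m H1" by (simp add: mor1_def Mmin_def h_def m_def)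
  have m2h: "mor2 M Mmin h = matapp (n - a) n H2" by (simp add: mor2_def Mmin_def h_def n_def)
  have arrP: "arrow (aP0 a) i x = 0" for i x by (simp add: arrow_def aP0_def matapp_def fun_eq_iff)
  have arrK: "arrow M i x \<in> kvec n" for i x by (simp add: arrow_def n_def matapp_kvec)
  have se: "short_exact r (aP0 a) M Mmin g h"
    unfolding short_exact_def
  proof (intro conjI)
    show "is_morph r (aP0 a) M g"
      unfolding is_morph_def
    proof (intro allI impI ballI)
      fix i and x :: "nat \<Rightarrow> 'k"
      show "mor2 (aP0 a) M g (arrow (aP0 a) i x) = arrow M i (mor1 (aP0 a) M g x)"
        unfolding arrP m1g m2g matapp_zero by (simp only: arrow_def matapp_zero)
    qed
    show "is_morph r M Mmin h"
      unfolding is_morph_def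
    proof (intro allI impI ballI)
      fix i and x :: "nat \<Rightarrow> 'k" assume x: "x \<in> kvec (dim1 M)"
      then have xm: "x \<in> kvec m" by (simp add: m_def)
      show "mor2 M Mmin h (arrow M i x) = arrow Mmin i (mor1 M Mmin h x)"
        by (simp add: m2h m1h H2pi[OF arrK] H1id[OF xm] arrMmin[OF xm])
    qed
    show "inj_on (mor1 (aP0 a) M g) (kvec (dim1 (aP0 a :: 'k krep)))"
      by (simp add: aP0_def kvec0)
    show "inj_on (mor2 (aP0 a) M g) (kvec (dim2 (aP0 a :: 'k krep)))"
      unfolding m2g
    proof (rule inj_onI)
      fix y1 y2 assume y1': "y1 \<in> kvec (dim2 (aP0 a :: 'k krep))" and y2': "y2 \<in> kvec (dim2 (aP0 a :: 'k krep))"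
        and e: "matapp n a G2 y1 = matapp n a G2 y2"
      have y1: "y1 \<in> kvec a" using y1' by (simp add: aP0_def)
      have y2: "y2 \<in> kvec a" using y2' by (simp add: aP0_def)
      show "y1 = y2"
      proof (rule ext)
        fix k show "y1 k = y2 k"
        proof (cases "k < a")
          case True
          then show ?thesis using e G2at[OF True, of y1] G2at[OF True, of y2] by (simp add: G2f)
        next
          case False then show ?thesis using y1 y2 by (simp add: kvec_def)
        qed
      qed
    qed
    show "mor1 (aP0 a) M g ` kvec (dim1 (aP0 a :: 'k krep)) = {x \<in> kvec (dim1 M). mor1 M Mmin h x = 0}"
    proof -
      have "mor1 (aP0 a) M g ` kvec (dim1 (aP0 a :: 'k krep)) = {0}" proof -
        have k0: "kvec (dim1 (aP0 a :: 'k krep)) = {0}" by (simp add: aP0_def kvec0)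
        show ?thesis by (simp only: k0 image_insert image_empty m1g)
      qed
      moreover have "{x \<in> kvec (dim1 M). mor1 M Mmin h x = 0} = {0}"
      proof
        show "{x \<in> kvec (dim1 M). mor1 M Mmin h x = 0} \<subseteq> {0}"
          using H1id by (auto simp: m1h m_def)
        show "{0} \<subseteq> {x \<in> kvec (dim1 M). mor1 M Mmin h x = 0}"
          by (auto simp: m1h kvec_def matapp_def fun_eq_iff)
      qed
      ultimately show ?thesis by simp
    qed
    show "mor2 (aP0 a) M g ` kvec (dim2 (aP0 a :: 'k krep)) = {x \<in> kvec (dim2 M). mor2 M Mmin h x = 0}"
    proof
      show "mor2 (aP0 a) M g ` kvec (dim2 (aP0 a :: 'k krep)) \<subseteq> {x \<in> kvec (dim2 M). mor2 M Mmin h x = 0}"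
      proof
        fix x assume "x \<in> mor2 (aP0 a) M g ` kvec (dim2 (aP0 a :: 'k krep))"
        then obtain y where x: "x = matapp n a G2 y" by (auto simp: m2g)
        have xK: "x \<in> kvec n" using x by (simp add: matapp_kvec)
        have "x = (\<Sum>k<a. sc (y k) (w (tau k)))" using x G2f by simp
        also have "\<dots> \<in> U" using w Uss tauT by (intro V.subspace_sum V.subspace_scale) auto
        finally have "x \<in> U" .
        then have "pi x = 0" using pi0[OF xK] by simp
        then show "x \<in> {x \<in> kvec (dim2 M). mor2 M Mmin h x = 0}"
          using xK H2pi[OF xK] by (simp add: m2h n_def)
      qed
      show "{x \<in> kvec (dim2 M). mor2 M Mmin h x = 0} \<subseteq> mor2 (aP0 a) M g ` kvec (dim2 (aP0 a :: 'k krep))"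
      proof
        fix x assume "x \<in> {x \<in> kvec (dim2 M). mor2 M Mmin h x = 0}"
        then have xK: "x \<in> kvec n" and "matapp (n - a) n H2 x = 0" by (simp_all add: m2h n_def)
        then have "pi x = 0" using H2pi[OF xK] by simp
        then have "x \<in> U" using pi0[OF xK] by simp
        then have "x = (\<Sum>t\<in>T. sc (x t) (w t))" using repU by blast
        also have "\<dots> = (\<Sum>k\<in>{0..<a}. sc (x (tau k)) (w (tau k)))"
          by (rule sum.reindex_bij_betw[OF tau, symmetric])
        also have "\<dots> = (\<Sum>k<a. sc ((\<lambda>k. if k < a then x (tau k) else 0) k) (w (tau k)))"
          by (simp add: atLeast0LessThan)
        also have "\<dots> = matapp n a G2 (\<lambda>k. if k < a then x (tau k) else 0)" by (simp only: G2f)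
        finally have xe: "x = matapp n a G2 (\<lambda>k. if k < a then x (tau k) else 0)" .
        have kv: "(\<lambda>k. if k < a then x (tau k) else 0) \<in> kvec a" by (simp add: kvec_def)
        have ka: "kvec (dim2 (aP0 a :: 'k krep)) = kvec a" by (simp add: aP0_def)
        show "x \<in> mor2 (aP0 a) M g ` kvec (dim2 (aP0 a :: 'k krep))"
          unfolding m2g ka by (rule image_eqI[where f = "matapp n a G2", OF xe kv])
      qed
    qed
    show "mor1 M Mmin h ` kvec (dim1 M) = kvec (dim1 Mmin)"
    proof -
      have "mor1 M Mmin h ` kvec m = id ` kvec m" unfolding m1h by (rule image_cong) (simp_all add: H1id)
      then show ?thesis by (simp add: m_def Mmin_def)
    qed
    show "mor2 M Mmin h ` kvec (dim2 M) = kvec (dim2 Mmin)"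
    proof -
      have "mor2 M Mmin h ` kvec n = pi ` kvec n" unfolding m2h by (rule image_cong) (simp_all add: H2pi)
      then show ?thesis using pi_surj by (simp add: n_def Mmin_def)
    qed
  qed
  have rp: "rep_proj r d Mmin"
    unfolding rep_proj_def
  proof (intro allI impI)
    fix V :: "(nat \<Rightarrow> 'k) set"
    assume V: "V \<subseteq> kvec r \<and> V.subspace V \<and> V.dim V = d"
    then have GrV: "Gr r d V" by (simp add: Gr_def)
    have ts: "tensor_sub Mmin V = tensor_sub M V" by (simp add: tensor_sub_def Mmin_def m_def)
    have psiM: "psi r Mmin t = pi (psi r M t)" if t: "t \<in> tensor_sub M V" for t
    proof -
      have "psi r Mmin t = (\<Sum>i<r. arrow Mmin i (t i))" by (simp add: psi_def fun_eq_iff sum_fapp)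
      also have "\<dots> = (\<Sum>i<r. pi (arrow M i (t i)))"
        by (rule sum.cong[OF refl]) (simp add: arrMmin tsub_kvec[OF t, unfolded m_def[symmetric]])
      also have "\<dots> = pi (\<Sum>i<r. arrow M i (t i))" by (rule lin_sum[OF pi_add, symmetric])
      also have "(\<Sum>i<r. arrow M i (t i)) = psi r M t" by (simp add: psi_def fun_eq_iff sum_fapp)
      finally show ?thesis .
    qed
    have pr': "inj_on (psi r M) (tensor_sub M V)" using pr V by (simp add: rep_proj_def)
    show "inj_on (psi r Mmin) (tensor_sub Mmin V)"
      unfolding ts
    proof (rule inj_onI)
      fix t1 t2 assume t1: "t1 \<in> tensor_sub M V" and t2: "t2 \<in> tensor_sub M V"
        and e: "psi r Mmin t1 = psi r Mmin t2"
      have td: "t1 - t2 \<in> tensor_sub M V" using t1 t2 by (rule tensor_sub_diff)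
      have "pi (psi r M (t1 - t2)) = pi (psi r M t1) - pi (psi r M t2)"
        by (simp only: psi_diff lin_diff[OF pi_add])
      also have "\<dots> = 0" using e psiM[OF t1] psiM[OF t2] by simp
      finally have "pi (psi r M (t1 - t2)) = 0" .
      moreover have pK: "psi r M (t1 - t2) \<in> kvec n" using psi_kvec by (simp add: n_def)
      ultimately have "psi r M (t1 - t2) \<in> U" using pi0 by blast
      then have "psi r M (t1 - t2) = 0" using goodU[OF GrV td] by (simp add: U_def)
      then have "psi r M t1 = psi r M t2" by (simp add: psi_diff)
      then show "t1 = t2" using pr' t1 t2 by (simp add: inj_on_def)
    qed
  qed
  have "dim2 Mmin = dim2 M - a \<and> dim1 Mmin = dim1 M" by (simp add: Mmin_def n_def m_def)
  then show ?thesis using se rp by blast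
qed

theorem proposition2p3p5:
  fixes r d :: nat and M :: "'k::alg_closed_field krep"
  assumes "r \<ge> 2" and "1 \<le> d" and "d \<le> r - 1"
    and "rep_proj r d M"
    and "Delta M d > int d * (int r - int d)"
  shows "\<exists>a::nat. a > 0 \<and> (\<exists>Mmin :: 'k krep. \<exists>g h.
           short_exact r (aP0 a) M Mmin g h \<and>
           rep_proj r d Mmin \<and> Delta Mmin d = int d * (int r - int d))"
proof -
  define n where "n = dim2 M"
  define m where "m = dim1 M"
  have dr: "d \<le> r" using assms(1,3) by simp
  have e1: "int d * (int r - int d) = int (d * (r - d))" using dr by (simp add: of_nat_diff)
  have "int n - int d * int m > int (d * (r - d))"
    using assms(5) e1 by (simp add: Delta_def n_def m_def)
  then have "int (d * (r - d) + d * m) < int n" by simp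
  then have lt: "d * (r - d) + d * m < n" by (simp only: of_nat_less_iff)
  define a where "a = n - (d * (r - d) + d * m)"
  have a0: "a > 0" using lt by (simp add: a_def)
  have eq: "d * (r - d) + d * dim1 M + a = dim2 M" using lt by (simp add: a_def n_def m_def)
  obtain Us where Us: "Good r d M Us" "card Us = a" using build[OF eq dr, of a] by blast
  have an: "a \<le> dim2 M" using eq by simp
  obtain Mmin g h where se: "short_exact r (aP0 a) M Mmin g h" and rp: "rep_proj r d Mmin"
    and dm: "dim2 Mmin = dim2 M - a" "dim1 Mmin = dim1 M"
    using main_construct[OF Us(1) Us(2) an assms(4)] by blast
  have "Delta Mmin d = int (dim2 M - a) - int d * int (dim1 M)" by (simp add: Delta_def dm)
  also have "dim2 M - a = d * (r - d) + d * dim1 M" using eq by linarith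
  also have "int (d * (r - d) + d * dim1 M) - int d * int (dim1 M) = int (d * (r - d))" by simp
  also have "\<dots> = int d * (int r - int d)" using e1 by (rule sym)
  finally show ?thesis using se rp a0 by blast
qed

end
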